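(* There exist constants $0<C_1<C_2<\infty$ such that for all sufficiently small $\delta>0$, $$C_1\,\delta|\log\delta|\le\Omega_1(\log|\sin\pi x|;\delta)\le C_2\,\delta|\log\delta|.$$ Consequently, for Lebesgue almost every $\xi$, $$\lim_{N\to\infty}\frac1N\sum_{n=1}^N\log|\sin\pi(2^n\xi-\xi)|=-\log2.$$
   Context: For $f\in L^1(\mathbb R/\mathbb Z)$ (a $1$-periodic integrable function), $\Omega_1(f;\delta)=\int_0^1|f(x+\delta)-f(x)|\,dx$ denotes its $L^1$-modulus of continuity. *)

theory Defs
  imports "HOL-Analysis.Analysis"
begin

definition omega1 :: "(real \<Rightarrow> real) \<Rightarrow> real \<Rightarrow> real" where
  "omega1 f \<delta> = (\<integral>x\<in>{0..1}. \<bar>f (x + \<delta>) - f x\<bar> \<partial>lborel)"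

text \<open>The function x \<mapsto> log |sin(pi x)| (Isabelle's ln 0 = 0 only affects a null set).\<close>
definition logsin :: "real \<Rightarrow> real" where
  "logsin x = ln \<bar>sin (pi * x)\<bar>"

end

theory Submission
  imports Defs "HOL-Computational_Algebra.Fundamental_Theorem_Algebra" "HOL-Library.Discrete_Functions"
begin


lemma logsin_int: "logsin (x + of_int k) = logsin x"
proof -
  have "sin (pi * (x + of_int k)) = sin (pi * x) * cos (pi * of_int k)"
    by (simp add: distrib_left sin_add)
  hence "\<bar>sin (pi * (x + of_int k))\<bar> = \<bar>sin (pi * x)\<bar>" by (simp add: abs_mult)
  thus ?thesis by (simp add: logsin_def)
qed

lemma logsin_nat: "logsin (x + of_nat k) = logsin x"
  using logsin_int[of x "int k"] by simp

lemma logsin_one: "logsin (x + 1) = logsin x"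
  using logsin_nat[of x 1] by simp

lemma logsin_minus: "logsin (- x) = logsin x"
  by (simp add: logsin_def)

lemma logsin_refl: "logsin (1 - x) = logsin x"
  using logsin_one[of "-x"] logsin_minus[of x] by simp

lemma logsin_nonpos: "logsin x \<le> 0"
  by (cases "sin (pi*x) = 0") (auto simp: logsin_def abs_sin_le_one)

lemma logsin_meas[measurable]: "logsin \<in> borel_measurable borel"
  unfolding logsin_def by measurable

lemma logsin_pos: "0 < x \<Longrightarrow> x < 1 \<Longrightarrow> logsin x = ln (sin (pi * x))"
  using sin_gt_zero[of "pi * x"] by (simp add: logsin_def)

lemma xcos_le_sin: "0 \<le> u \<Longrightarrow> u \<le> pi/2 \<Longrightarrow> u * cos u \<le> sin u"
proof (cases "u = pi/2")
  case True
  have "cos u = 0" by (simp only: True cos_pi_half)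
  moreover have "sin u = 1" by (simp only: True sin_pi_half)
  ultimately show ?thesis by simp
next
  case False
  assume a: "0 \<le> u" "u \<le> pi/2"
  hence u: "u < pi/2" using False by simp
  have "\<bar>u\<bar> \<le> \<bar>tan u\<bar>" using abs_tan_ge[of u] a u by simp
  moreover have "cos u > 0" using a u by (intro cos_gt_zero_pi) auto
  moreover have "tan u \<ge> 0" unfolding tan_def using a u pi_gt_zero
    by (intro divide_nonneg_nonneg sin_ge_zero cos_ge_zero) auto
  ultimately have "u \<le> sin u / cos u" using a by (simp add: tan_def)
  thus ?thesis using \<open>cos u > 0\<close> by (simp add: field_simps)
qed

lemma sin_pi_ge: assumes "0 \<le> y" "y \<le> 1/2" shows "y \<le> sin (pi * y)"
proof (cases "y \<le> 1/3")
  case True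
  have "cos (pi * y) \<ge> cos (pi / 3)"
    using True assms by (intro cos_monotone_0_pi_le) auto
  hence c: "cos (pi * y) \<ge> 1/2" by (simp add: cos_60)
  have "pi * y * cos (pi * y) \<le> sin (pi * y)"
    using assms by (intro xcos_le_sin) auto
  moreover have "pi * y * cos (pi * y) \<ge> pi * y * (1/2)"
    using c assms by (intro mult_left_mono) auto
  moreover have "pi * y * (1/2) \<ge> y"
  proof -
    have "2 * y \<le> pi * y" using pi_gt3 assms by (intro mult_right_mono) auto
    thus ?thesis by simp
  qed
  ultimately show ?thesis by linarith
next
  case False
  have "sin (pi / 3) \<le> sin (pi * y)"
  proof (rule sin_monotone_2pi_le)
    show "- (pi / 2) \<le> pi / 3" using pi_gt_zero by linarith
    show "pi / 3 \<le> pi * y" using False pi_gt_zero mult_left_mono[of "1/3" y pi] by simp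
    show "pi * y \<le> pi / 2" using assms pi_gt_zero mult_left_mono[of y "1/2" pi] by simp
  qed
  moreover have "sin (pi/3) = sqrt 3 / 2" by (simp add: sin_60)
  moreover have "sqrt 3 / 2 \<ge> (1/2::real)"
    by (simp add: real_le_rsqrt)
  ultimately show ?thesis using assms by linarith
qed

lemma neg_logsin_le: assumes "0 < y" "y \<le> 1/2" shows "- logsin y \<le> - ln y"
proof -
  have s: "y \<le> sin (pi * y)" using sin_pi_ge assms by auto
  have "logsin y = ln (sin (pi * y))" using assms by (intro logsin_pos) auto
  moreover have "ln y \<le> ln (sin (pi * y))" using s assms by simp
  ultimately show ?thesis by simp
qed

lemma neg_logsin_le': assumes "1/2 \<le> y" "y < 1" shows "- logsin y \<le> - ln (1 - y)"
  using neg_logsin_le[of "1 - y"] assms logsin_refl[of y] by simp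

lemma ln_sq_le: fixes y :: real assumes "0 < y" "y \<le> 1" shows "(ln y)^2 \<le> 16 * y powr (-1/2)"
proof -
  have p: "y powr (-1/4::real) > 0" using assms by simp
  have "ln (y powr (-1/4)) \<le> y powr (-1/4) - 1" by (rule ln_le_minus_one[OF p])
  hence "-(1/4) * ln y \<le> y powr (-1/4)" using assms by (simp add: ln_powr)
  hence a: "- ln y \<le> 4 * y powr (-1/4)" by simp
  have b: "0 \<le> - ln y" using assms by simp
  have "(ln y)^2 = (- ln y)^2" by simp
  also have "\<dots> \<le> (4 * y powr (-1/4))^2" using a b by (intro power_mono) auto
  also have "\<dots> = 16 * (y powr (-1/4))^2" by (simp add: power_mult_distrib)
  also have "(y powr (-1/4))^2 = y powr (-1/2)"
    using assms by (simp add: powr_powr[symmetric] powr_power[symmetric] power2_eq_square powr_add[symmetric])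
  finally show ?thesis by simp
qed

lemma logsin_sq_bound: assumes "0 < x" "x < 1"
  shows "(logsin x)^2 \<le> 16 * (x powr (-1/2) + (1 - x) powr (-1/2))"
proof (cases "x \<le> 1/2")
  case True
  have "0 \<le> - logsin x" using logsin_nonpos[of x] by simp
  hence "(- logsin x)^2 \<le> (- ln x)^2"
    using neg_logsin_le[of x] True assms by (intro power_mono) auto
  hence "(logsin x)^2 \<le> (ln x)^2" by simp
  also have "\<dots> \<le> 16 * x powr (-1/2)" using assms by (intro ln_sq_le) auto
  finally show ?thesis by (smt (verit) powr_ge_zero)
next
  case False
  have "0 \<le> - logsin x" using logsin_nonpos[of x] by simp
  hence "(- logsin x)^2 \<le> (- ln (1-x))^2"
    using neg_logsin_le'[of x] False assms by (intro power_mono) auto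
  hence "(logsin x)^2 \<le> (ln (1-x))^2" by simp
  also have "\<dots> \<le> 16 * (1-x) powr (-1/2)" using assms by (intro ln_sq_le) auto
  finally show ?thesis by (smt (verit) powr_ge_zero)
qed




abbreviation ind01 :: "real \<Rightarrow> real" where "ind01 \<equiv> indicator {0..<1}"

lemma shift_integral:
  fixes F :: "real \<Rightarrow> real"
  shows "integral\<^sup>L lborel (\<lambda>z. indicator {c..<c+1} z * F z) = integral\<^sup>L lborel (\<lambda>z. ind01 z * F (z + c))"
    and "integrable lborel (\<lambda>z. indicator {c..<c+1} z * F z) \<longleftrightarrow> integrable lborel (\<lambda>z. ind01 z * F (z + c))"
proof -
  have e: "(\<lambda>x. indicator {c..<c+1} (c + 1 * x) * F (c + 1 * x)) = (\<lambda>z. ind01 z * F (z + c))"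
    by (auto simp: indicator_def add.commute)
  show "integral\<^sup>L lborel (\<lambda>z. indicator {c..<c+1} z * F z) = integral\<^sup>L lborel (\<lambda>z. ind01 z * F (z + c))"
    using lborel_integral_real_affine[of 1 "\<lambda>z. indicator {c..<c+1} z * F z" c] e by simp
  show "integrable lborel (\<lambda>z. indicator {c..<c+1} z * F z) \<longleftrightarrow> integrable lborel (\<lambda>z. ind01 z * F (z + c))"
    using lborel_integrable_real_affine_iff[of 1 "\<lambda>z. indicator {c..<c+1} z * F z" c] e by simp
qed

lemma split_integral:
  fixes F :: "real \<Rightarrow> real"
  assumes "\<And>j. j < m \<Longrightarrow> integrable lborel (\<lambda>z. ind01 z * F (z + c + real j))"
  shows "integrable lborel (\<lambda>z. indicator {c..<c + real m} z * F z) \<and>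
         integral\<^sup>L lborel (\<lambda>z. indicator {c..<c + real m} z * F z) =
           (\<Sum>j<m. integral\<^sup>L lborel (\<lambda>z. ind01 z * F (z + c + real j)))"
  using assms
proof (induction m)
  case 0
  thus ?case by simp
next
  case (Suc m)
  have IH: "integrable lborel (\<lambda>z. indicator {c..<c + real m} z * F z)"
           "integral\<^sup>L lborel (\<lambda>z. indicator {c..<c + real m} z * F z) =
           (\<Sum>j<m. integral\<^sup>L lborel (\<lambda>z. ind01 z * F (z + c + real j)))"
    using Suc by auto
  have p: "integrable lborel (\<lambda>z. ind01 z * F (z + (c + real m)))"
    using Suc.prems[of m] by (simp add: add.assoc)
  hence p': "integrable lborel (\<lambda>z. indicator {c + real m..<c + real m + 1} z * F z)"
    using shift_integral(2)[of "c + real m" F] by simp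
  have ind: "indicator {c..<c + real (Suc m)} z * F z =
        indicator {c..<c + real m} z * F z + indicator {c + real m..<c + real m + 1} z * F z" for z
    by (auto simp: indicator_def)
  have i2: "integral\<^sup>L lborel (\<lambda>z. indicator {c + real m..<c + real m + 1} z * F z)
      = integral\<^sup>L lborel (\<lambda>z. ind01 z * F (z + c + real m))"
    using shift_integral(1)[of "c + real m" F] by (simp add: add.assoc)
  show ?case
    unfolding ind using IH p' i2 by (simp add: Bochner_Integration.integral_add)
qed

lemma split_integrable_piece:
  fixes F :: "real \<Rightarrow> real"
  assumes "integrable lborel (\<lambda>z. indicator {c..<c + real m} z * F z)" "j < m"
  shows "integrable lborel (\<lambda>z. ind01 z * F (z + c + real j))"
proof -
  have "integrable lborel (\<lambda>z. indicator {c + real j..<c + real j + 1} z *\<^sub>R (indicator {c..<c + real m} z * F z))"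
    by (rule integrable_mult_indicator) (use assms in auto)
  moreover have "(\<lambda>z. indicator {c + real j..<c + real j + 1} z *\<^sub>R (indicator {c..<c + real m} z * F z))
     = (\<lambda>z. indicator {c + real j..<c + real j + 1} z * F z)"
    using assms(2) by (auto simp: indicator_def fun_eq_iff)
  ultimately show ?thesis using shift_integral(2)[of "c + real j" F] by (simp add: add.assoc)
qed

lemma scale_integral:
  fixes H :: "real \<Rightarrow> real" and m :: nat
  assumes "m > 0"
  shows "integral\<^sup>L lborel (\<lambda>y. ind01 y * H (real m * y)) = integral\<^sup>L lborel (\<lambda>z. indicator {0..<real m} z * H z) / real m"
    and "integrable lborel (\<lambda>y. ind01 y * H (real m * y)) \<longleftrightarrow> integrable lborel (\<lambda>z. indicator {0..<real m} z * H z)"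
proof -
  have e: "(\<lambda>x. indicator {0..<real m} (0 + real m * x) * H (0 + real m * x)) = (\<lambda>y. ind01 y * H (real m * y))"
    using assms by (auto simp: indicator_def fun_eq_iff zero_le_mult_iff)
  have mm: "real m \<noteq> 0" using assms by simp
  show "integral\<^sup>L lborel (\<lambda>y. ind01 y * H (real m * y)) = integral\<^sup>L lborel (\<lambda>z. indicator {0..<real m} z * H z) / real m"
    using lborel_integral_real_affine[OF mm, of "\<lambda>z. indicator {0..<real m} z * H z" 0] e mm by simp
  show "integrable lborel (\<lambda>y. ind01 y * H (real m * y)) \<longleftrightarrow> integrable lborel (\<lambda>z. indicator {0..<real m} z * H z)"
    using lborel_integrable_real_affine_iff[OF mm, of "\<lambda>z. indicator {0..<real m} z * H z" 0] e by simp
qed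

definition per :: "(real \<Rightarrow> real) \<Rightarrow> bool" where "per H \<longleftrightarrow> (\<forall>x. H (x + 1) = H x)"

lemma per_nat: "per H \<Longrightarrow> H (x + real j) = H x"
proof (induction j arbitrary: x)
  case 0 thus ?case by simp
next
  case (Suc j)
  have "H (x + real (Suc j)) = H ((x + real j) + 1)" by (simp add: algebra_simps)
  also have "\<dots> = H (x + real j)" using Suc.prems by (simp add: per_def)
  finally show ?case using Suc by simp
qed

lemma per_int: assumes "per H" shows "H (x + of_int k) = H x"
proof (cases "k \<ge> 0")
  case True
  then obtain j where "k = int j" by (metis nonneg_int_cases)
  thus ?thesis using per_nat[OF assms] by simp
next
  case False
  then obtain j where j: "k = - int j" by (metis nonpos_int_cases le_less not_le)
  have "H (x + of_int k + real j) = H (x + of_int k)" by (rule per_nat[OF assms])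
  thus ?thesis using j by simp
qed

lemma L1_integrable:
  fixes H :: "real \<Rightarrow> real" and m :: nat
  assumes "m > 0" "per H" "integrable lborel (\<lambda>z. ind01 z * H z)"
  shows "integrable lborel (\<lambda>y. ind01 y * H (real m * y))"
    and "integral\<^sup>L lborel (\<lambda>y. ind01 y * H (real m * y)) = integral\<^sup>L lborel (\<lambda>z. ind01 z * H z)"
proof -
  have pieces: "integrable lborel (\<lambda>z. ind01 z * H (z + 0 + real j))" for j
    using assms(3) per_nat[OF assms(2)] by simp
  from split_integral[of m H 0, OF pieces]
  have s: "integrable lborel (\<lambda>z. indicator {0..<real m} z * H z)"
     "integral\<^sup>L lborel (\<lambda>z. indicator {0..<real m} z * H z) = real m * integral\<^sup>L lborel (\<lambda>z. ind01 z * H z)"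
    using per_nat[OF assms(2)] by auto
  show "integrable lborel (\<lambda>y. ind01 y * H (real m * y))"
    using scale_integral(2)[OF assms(1), of H] s(1) by simp
  show "integral\<^sup>L lborel (\<lambda>y. ind01 y * H (real m * y)) = integral\<^sup>L lborel (\<lambda>z. ind01 z * H z)"
    using scale_integral(1)[OF assms(1), of H] s(2) assms(1) by simp
qed

lemma transfer:
  fixes h k :: "real \<Rightarrow> real" and m :: nat
  assumes "m > 0" "per h" "integrable lborel (\<lambda>y. ind01 y * (h (real m * y) * k y))"
  shows "integral\<^sup>L lborel (\<lambda>y. ind01 y * (h (real m * y) * k y)) =
         integral\<^sup>L lborel (\<lambda>z. ind01 z * (h z * ((\<Sum>j<m. k ((z + real j) / real m)) / real m)))"
    and "integrable lborel (\<lambda>z. ind01 z * (h z * ((\<Sum>j<m. k ((z + real j) / real m)) / real m)))"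
proof -
  define F where "F = (\<lambda>z. h z * k (z / real m))"
  have FF: "F (real m * y) = h (real m * y) * k y" for y using assms(1) by (simp add: F_def)
  have i1: "integrable lborel (\<lambda>z. indicator {0..<real m} z * F z)"
    using scale_integral(2)[OF assms(1), of F] assms(3) by (simp add: FF)
  have Fp: "F (z + real j) = h z * k ((z + real j) / real m)" for z j
    using per_nat[OF assms(2)] by (simp add: F_def)
  have pieces: "integrable lborel (\<lambda>z. ind01 z * (h z * k ((z + real j) / real m)))" if "j < m" for j
    using split_integrable_piece[of 0 m F j] i1 that by (simp add: Fp)
  have s: "integral\<^sup>L lborel (\<lambda>z. indicator {0..<real m} z * F z) =
        (\<Sum>j<m. integral\<^sup>L lborel (\<lambda>z. ind01 z * (h z * k ((z + real j) / real m))))"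
    using split_integral[of m F 0] pieces by (simp add: Fp)
  have eq: "(\<lambda>z. ind01 z * (h z * ((\<Sum>j<m. k ((z + real j) / real m)) / real m))) =
      (\<lambda>z. (\<Sum>j<m. ind01 z * (h z * k ((z + real j) / real m))) / real m)"
  proof (rule ext)
    fix z :: real
    show "ind01 z * (h z * ((\<Sum>j<m. k ((z + real j) / real m)) / real m)) =
      (\<Sum>j<m. ind01 z * (h z * k ((z + real j) / real m))) / real m"
      by (cases "z \<in> {0..<1}") (simp_all add: sum_distrib_left)
  qed
  show "integrable lborel (\<lambda>z. ind01 z * (h z * ((\<Sum>j<m. k ((z + real j) / real m)) / real m)))"
    unfolding eq by (intro integrable_divide_zero Bochner_Integration.integrable_sum pieces) simp
  have "integral\<^sup>L lborel (\<lambda>y. ind01 y * (h (real m * y) * k y)) =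
      integral\<^sup>L lborel (\<lambda>z. indicator {0..<real m} z * F z) / real m"
    using scale_integral(1)[OF assms(1), of F] by (simp add: FF)
  also have "\<dots> = (\<Sum>j<m. integral\<^sup>L lborel (\<lambda>z. ind01 z * (h z * k ((z + real j) / real m)))) / real m"
    unfolding s ..
  also have "(\<Sum>j<m. integral\<^sup>L lborel (\<lambda>z. ind01 z * (h z * k ((z + real j) / real m))))
     = integral\<^sup>L lborel (\<lambda>z. \<Sum>j<m. ind01 z * (h z * k ((z + real j) / real m)))"
    by (rule Bochner_Integration.integral_sum[symmetric]) (rule pieces, simp)
  also have "\<dots> / real m = integral\<^sup>L lborel (\<lambda>z. (\<Sum>j<m. ind01 z * (h z * k ((z + real j) / real m))) / real m)"
    by (rule integral_divide_zero[symmetric])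
  also have "\<dots> = integral\<^sup>L lborel (\<lambda>z. ind01 z * (h z * ((\<Sum>j<m. k ((z + real j) / real m)) / real m)))"
    unfolding eq ..
  finally show "integral\<^sup>L lborel (\<lambda>y. ind01 y * (h (real m * y) * k y)) =
         integral\<^sup>L lborel (\<lambda>z. ind01 z * (h z * ((\<Sum>j<m. k ((z + real j) / real m)) / real m)))" .
qed




lemma norm_cis_diff: "norm (cis a - cis b) = 2 * \<bar>sin ((a - b) / 2)\<bar>"
proof -
  have "(norm (cis a - cis b))^2 = (cos a - cos b)^2 + (sin a - sin b)^2"
    by (simp add: cmod_power2)
  also have "\<dots> = 2 - 2 * (cos a * cos b + sin a * sin b)"
    by (simp add: power2_eq_square algebra_simps)
  also have "cos a * cos b + sin a * sin b = cos (a - b)" by (simp add: cos_diff)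
  also have "cos (a - b) = cos (2 * ((a - b)/2))" by (simp only: mult_2 field_sum_of_halves)
  also have "\<dots> = 1 - 2 * (sin ((a - b)/2))^2" by (rule cos_double_sin)
  finally have "(norm (cis a - cis b))^2 = (2 * \<bar>sin ((a - b) / 2)\<bar>)^2"
    by (simp add: power_mult_distrib)
  thus ?thesis by (rule power2_eq_imp_eq) auto
qed

lemma roots_unity_prod:
  fixes a :: nat and z :: complex
  assumes "a > 0"
  shows "z ^ a - 1 = (\<Prod>k<a. z - cis (2 * pi * real k / real a))"
proof -
  define p :: "complex poly" where "p = [:-1:] + monom 1 a"
  have pz: "poly p w = w ^ a - 1" for w by (simp add: p_def poly_monom)
  have deg: "degree p = a" unfolding p_def using assms
    by (subst degree_add_eq_right) (auto simp: degree_monom_eq)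
  have lc: "lead_coeff p = 1" using deg assms by (cases a) (auto simp: p_def coeff_monom)
  have dp: "poly (pderiv p) w = of_nat a * w ^ (a - 1)" for w
    by (simp add: p_def pderiv_add pderiv_monom poly_monom pderiv_pCons)
  have sf: "rsquarefree p"
    unfolding rsquarefree_roots
  proof (intro allI notI)
    fix w assume "poly p w = 0 \<and> poly (pderiv p) w = 0"
    hence "w ^ a = 1" "w ^ (a - 1) = 0" using assms by (auto simp: pz dp)
    thus False using assms by (metis power_eq_0_iff zero_neq_one power_0 not_gr_zero)
  qed
  have "p = smult (lead_coeff p) (\<Prod>w | poly p w = 0. [:- w, 1:])"
    using complex_poly_decompose_rsquarefree[OF sf] by simp
  hence "p = (\<Prod>w | w ^ a = 1. [:- w, 1:])" using lc by (simp add: pz)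
  hence "poly p z = (\<Prod>w | w ^ a = 1. z - w)" by (simp add: poly_prod)
  also have "\<dots> = (\<Prod>k<a. z - cis (2 * pi * real k / real a))"
    by (rule prod.reindex_bij_betw[symmetric, OF Complex.bij_betw_roots_unity[OF assms], of "\<lambda>w. z - w"])
  finally show ?thesis by (simp add: pz)
qed

lemma sin_prod_abs:
  fixes a :: nat and x :: real
  assumes "a > 0"
  shows "2 * \<bar>sin (pi * x)\<bar> = (\<Prod>k<a. 2 * \<bar>sin (pi * (x + real k) / real a)\<bar>)"
proof -
  have A: "2 * \<bar>sin (pi * y)\<bar> = (\<Prod>k<a. 2 * \<bar>sin (pi * (y - real k) / real a)\<bar>)" for y
  proof -
    have "cis (2 * pi * y / real a) ^ a = cis (real a * (2 * pi * y / real a))" by (rule Complex.DeMoivre)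
    also have "real a * (2 * pi * y / real a) = 2 * pi * y" using assms by simp
    finally have "cis (2 * pi * y / real a) ^ a = cis (2 * pi * y)" .
    hence "cis (2 * pi * y) - 1 = (\<Prod>k<a. cis (2 * pi * y / real a) - cis (2 * pi * real k / real a))"
      using roots_unity_prod[OF assms, of "cis (2 * pi * y / real a)"] by simp
    hence "norm (cis (2 * pi * y) - cis 0) = (\<Prod>k<a. norm (cis (2 * pi * y / real a) - cis (2 * pi * real k / real a)))"
      by (simp add: prod_norm)
    moreover have "norm (cis (2 * pi * y) - cis 0) = 2 * \<bar>sin (pi * y)\<bar>"
      using norm_cis_diff[of "2 * pi * y" 0] by simp
    moreover have "norm (cis (2 * pi * y / real a) - cis (2 * pi * real k / real a)) = 2 * \<bar>sin (pi * (y - real k) / real a)\<bar>" for k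
      by (simp add: norm_cis_diff diff_divide_distrib right_diff_distrib)
    ultimately show ?thesis by simp
  qed
  have "2 * \<bar>sin (pi * x)\<bar> = 2 * \<bar>sin (pi * (- x))\<bar>" by simp
  also have "\<dots> = (\<Prod>k<a. 2 * \<bar>sin (pi * (- x - real k) / real a)\<bar>)" by (rule A)
  also have "\<dots> = (\<Prod>k<a. 2 * \<bar>sin (pi * (x + real k) / real a)\<bar>)"
  proof (rule prod.cong[OF refl])
    fix k
    have "pi * (- x - real k) / real a = - (pi * (x + real k) / real a)"
      by (simp add: add_divide_distrib diff_divide_distrib algebra_simps)
    thus "2 * \<bar>sin (pi * (- x - real k) / real a)\<bar> = 2 * \<bar>sin (pi * (x + real k) / real a)\<bar>"
      by (simp only: sin_minus abs_minus_cancel)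
  qed
  finally show ?thesis .
qed

definition gg :: "real \<Rightarrow> real" where "gg x = logsin x + ln 2"

lemma gg_alt: "sin (pi * x) \<noteq> 0 \<Longrightarrow> gg x = ln (2 * \<bar>sin (pi * x)\<bar>)"
  by (simp add: gg_def logsin_def ln_mult)

lemma per_gg: "per gg" by (simp add: per_def gg_def logsin_one)

lemma gg_meas[measurable]: "gg \<in> borel_measurable borel"
  unfolding gg_def by measurable

lemma prodform:
  fixes a :: nat and w :: real
  assumes "a > 0" "sin (pi * w) \<noteq> 0"
  shows "(\<Sum>j<a. gg ((w + real j) / real a)) = gg w"
proof -
  have P: "2 * \<bar>sin (pi * w)\<bar> = (\<Prod>k<a. 2 * \<bar>sin (pi * (x + real k) / real a)\<bar>)" if "x = w" for x
    using sin_prod_abs[OF assms(1), of w] that by simp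
  have nz: "sin (pi * (w + real k) / real a) \<noteq> 0" if "k < a" for k
  proof
    assume "sin (pi * (w + real k) / real a) = 0"
    hence z: "(\<Prod>k<a. 2 * \<bar>sin (pi * (w + real k) / real a)\<bar>) = 0"
      using that by (intro prod_zero) auto
    have "2 * \<bar>sin (pi * w)\<bar> = 0" using P[of w] z by linarith
    thus False using assms(2) by simp
  qed
  have "gg w = ln (\<Prod>k<a. 2 * \<bar>sin (pi * (w + real k) / real a)\<bar>)"
    using gg_alt[OF assms(2)] P[of w] by simp
  also have "\<dots> = (\<Sum>k<a. ln (2 * \<bar>sin (pi * (w + real k) / real a)\<bar>))"
    using nz by (intro ln_prod) auto
  also have "\<dots> = (\<Sum>k<a. gg ((w + real k) / real a))"
    using nz by (intro sum.cong refl) (simp add: gg_alt)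
  finally show ?thesis by simp
qed




lemma sq_sum_le: "(u + v)^2 \<le> 2 * u^2 + 2 * (v::real)^2"
proof -
  have "0 \<le> (u - v)^2" by simp
  thus ?thesis by (simp add: power2_diff power2_sum)
qed

lemma abs_prod_le: "\<bar>u * v\<bar> \<le> u^2 + (v::real)^2"
proof -
  have "0 \<le> (\<bar>u\<bar> - \<bar>v\<bar>)^2" by simp
  hence a: "2 * (\<bar>u\<bar> * \<bar>v\<bar>) \<le> u^2 + v^2" by (simp add: power2_diff)
  have b: "0 \<le> \<bar>u\<bar> * \<bar>v\<bar>" by simp
  from a b have "\<bar>u\<bar> * \<bar>v\<bar> \<le> u^2 + v^2" by linarith
  thus ?thesis by (simp add: abs_mult)
qed

lemma int01: "integrable lborel (\<lambda>x::real. ind01 x)"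
  by (rule integrable_real_indicator) auto

lemma int01c: "integrable lborel (\<lambda>x::real. ind01 x * c)"
  using integrable_mult_right[OF int01, of c] by (simp add: mult.commute)

lemma logsin_sq_int: "integrable lborel (\<lambda>x. ind01 x * (logsin x)^2)"
proof -
  define B1 where "B1 = (\<lambda>t::real. t powr ((1/2) - 1) * (1 - t) powr (1 - 1))"
  define B2 where "B2 = (\<lambda>t::real. t powr (1 - 1) * (1 - t) powr ((1/2) - 1))"
  define D where "D = (\<lambda>t::real. 16 * (indicator {0..1} t * B1 t) + 16 * (indicator {0..1} t * B2 t))"
  have b1: "set_integrable lborel {0..1} B1"
    unfolding B1_def by (rule integrable_Beta) auto
  have b2: "set_integrable lborel {0..1} B2"
    unfolding B2_def by (rule integrable_Beta) auto
  have iD: "integrable lborel D"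
    unfolding D_def
    by (intro Bochner_Integration.integrable_add integrable_mult_right)
       (use b1 b2 in \<open>simp_all add: set_integrable_def\<close>)
  show ?thesis
  proof (rule Bochner_Integration.integrable_bound[OF iD], measurable, rule AE_I2)
    fix x :: real
    show "norm (ind01 x * (logsin x)^2) \<le> norm (D x)"
    proof (cases "0 < x \<and> x < 1")
      case True
      have "(logsin x)^2 \<le> 16 * (x powr (-1/2) + (1 - x) powr (-1/2))"
        using logsin_sq_bound True by auto
      moreover have "D x = 16 * (x powr (-1/2) + (1 - x) powr (-1/2))"
        using True by (simp add: D_def B1_def B2_def indicator_def algebra_simps)
      ultimately show ?thesis using True by (simp add: indicator_def)
    next
      case False
      have "D x \<ge> 0" by (simp add: D_def B1_def B2_def)
      moreover have z: "ind01 x * (logsin x)^2 = 0"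
        using False by (cases "x = 0") (auto simp: indicator_def logsin_def)
      ultimately show ?thesis by (simp only: z norm_zero) simp
    qed
  qed
qed

lemma gg_sq_int: "integrable lborel (\<lambda>x. ind01 x * (gg x)^2)"
proof -
  have i: "integrable lborel (\<lambda>x. ind01 x * (2 * (logsin x)^2) + ind01 x * (2 * (ln 2)^2))"
    using logsin_sq_int int01c
    by (intro Bochner_Integration.integrable_add) (auto simp: mult.left_commute[of "ind01 _"] intro: integrable_mult_right)
  show ?thesis
  proof (rule Bochner_Integration.integrable_bound[OF i], measurable, rule AE_I2)
    fix x :: real
    have "(gg x)^2 \<le> 2 * (logsin x)^2 + 2 * (ln 2)^2"
      unfolding gg_def by (rule sq_sum_le)
    hence "ind01 x * (gg x)^2 \<le> ind01 x * (2 * (logsin x)^2) + ind01 x * (2 * (ln 2)^2)"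
      by (auto simp: indicator_def)
    thus "norm (ind01 x * (gg x)^2) \<le> norm (ind01 x * (2 * (logsin x)^2) + ind01 x * (2 * (ln 2)^2))"
      by (simp add: indicator_def)
  qed
qed

lemma per_sq: "per H \<Longrightarrow> per (\<lambda>x. (H x)^2)" by (simp add: per_def)

lemma per_scale: assumes "per H" shows "per (\<lambda>x. H (real a * x))"
  unfolding per_def
proof
  fix x
  have "H (real a * (x + 1)) = H (real a * x + real a)" by (simp add: distrib_left)
  also have "\<dots> = H (real a * x)" by (rule per_nat[OF assms])
  finally show "H (real a * (x + 1)) = H (real a * x)" .
qed

lemma gg_scaled_sq_int: "a > 0 \<Longrightarrow> integrable lborel (\<lambda>y. ind01 y * (gg (real a * y))^2)"
  using L1_integrable(1)[of a "\<lambda>x. (gg x)^2"] per_sq[OF per_gg] gg_sq_int by simp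

lemma gg_prod_int:
  assumes "a > 0" "b > 0"
  shows "integrable lborel (\<lambda>y. ind01 y * (gg (real a * y) * gg (real b * y)))"
proof -
  have i: "integrable lborel (\<lambda>y. ind01 y * (gg (real a * y))^2 + ind01 y * (gg (real b * y))^2)"
    using gg_scaled_sq_int assms by (intro Bochner_Integration.integrable_add) auto
  show ?thesis
  proof (rule Bochner_Integration.integrable_bound[OF i], measurable, rule AE_I2)
    fix y :: real
    have "\<bar>gg (real a * y) * gg (real b * y)\<bar> \<le> (gg (real a * y))^2 + (gg (real b * y))^2"
      by (rule abs_prod_le)
    thus "norm (ind01 y * (gg (real a * y) * gg (real b * y))) \<le> norm (ind01 y * (gg (real a * y))^2 + ind01 y * (gg (real b * y))^2)"
      by (auto simp: indicator_def)
  qed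
qed

lemma ae_sin_nz:
  assumes "b > 0"
  shows "AE z in lborel. sin (pi * (real b * z)) \<noteq> 0"
proof (rule AE_I')
  show "range (\<lambda>i::int. of_int i / real b) \<in> null_sets lborel"
    by (rule countable_imp_null_set_lborel) auto
  show "{z \<in> space lborel. \<not> sin (pi * (real b * z)) \<noteq> 0} \<subseteq> range (\<lambda>i::int. of_int i / real b)"
  proof (intro subsetI)
    fix z assume "z \<in> {z \<in> space lborel. \<not> sin (pi * (real b * z)) \<noteq> 0}"
    hence "sin (pi * (real b * z)) = 0" by simp
    then obtain i :: int where "pi * (real b * z) = of_int i * pi" by (auto simp: sin_zero_iff_int2)
    hence "z = of_int i / real b" using assms by (simp add: field_simps)
    thus "z \<in> range (\<lambda>i::int. of_int i / real b)" by auto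
  qed
qed




definition GG :: real where "GG = integral\<^sup>L lborel (\<lambda>x. ind01 x * (gg x)^2)"

lemma GG_nonneg: "GG \<ge> 0"
  unfolding GG_def by (intro integral_nonneg_AE AE_I2) (simp add: indicator_def)

lemma mult_mod_bij:
  fixes a b :: nat
  assumes "a > 0" "coprime a b"
  shows "bij_betw (\<lambda>j. b * j mod a) {..<a} {..<a}"
proof -
  have inj: "inj_on (\<lambda>j. b * j mod a) {..<a}"
  proof (rule inj_onI)
    fix j j' assume j: "j \<in> {..<a}" "j' \<in> {..<a}" and e: "b * j mod a = b * j' mod a"
    show "j = j'"
    proof (rule ccontr)
      assume ne: "j \<noteq> j'"
      have *: "a dvd b * (u - v)" if "v \<le> u" "b * u mod a = b * v mod a" for u v
      proof -
        have "b * v \<le> b * u" using that(1) by simp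
        hence "a dvd b * u - b * v" using mod_eq_dvd_iff_nat that(2) by metis
        thus ?thesis by (simp add: right_diff_distrib')
      qed
      show False
      proof (cases "j < j'")
        case True
        hence "a dvd b * (j' - j)" using * [of j j'] e[symmetric] by auto
        hence "a dvd (j' - j)" using assms(2) by (simp add: coprime_dvd_mult_right_iff)
        moreover have "0 < j' - j" "j' - j < a" using True j by auto
        ultimately show False by (simp add: nat_dvd_not_less)
      next
        case False
        hence "j' < j" using ne by simp
        hence "a dvd b * (j - j')" using * [of j' j] e by auto
        hence "a dvd (j - j')" using assms(2) by (simp add: coprime_dvd_mult_right_iff)
        moreover have "0 < j - j'" "j - j' < a" using \<open>j' < j\<close> j by auto
        ultimately show False by (simp add: nat_dvd_not_less)
      qed
    qed
  qed
  have "(\<lambda>j. b * j mod a) ` {..<a} = {..<a}"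
    by (rule endo_inj_surj[OF _ _ inj]) (use assms in auto)
  thus ?thesis using inj by (simp add: bij_betw_def)
qed

lemma sum_perm:
  fixes a b :: nat
  assumes "a > 0" "coprime a b"
  shows "(\<Sum>j<a. gg (real b * ((z + real j) / real a))) = (\<Sum>r<a. gg ((real b * z + real r) / real a))"
proof -
  have t: "gg (real b * ((z + real j) / real a)) = gg ((real b * z + real (b * j mod a)) / real a)" for j
  proof -
    have "b * j = (b * j div a) * a + b * j mod a" by simp
    hence "real (b * j) = real (b * j div a) * real a + real (b * j mod a)"
      by (metis of_nat_add of_nat_mult)
    hence "real b * ((z + real j) / real a) = (real b * z + real (b * j mod a)) / real a + real (b * j div a)"
      using assms(1) by (simp add: field_simps)
    thus ?thesis using per_nat[OF per_gg] by simp
  qed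
  have "(\<Sum>j<a. gg (real b * ((z + real j) / real a))) = (\<Sum>j<a. gg ((real b * z + real (b * j mod a)) / real a))"
    by (rule sum.cong[OF refl], rule t)
  also have "\<dots> = (\<Sum>r<a. gg ((real b * z + real r) / real a))"
    using sum.reindex_bij_betw[OF mult_mod_bij[OF assms], of "\<lambda>r. gg ((real b * z + real r) / real a)"] by simp
  finally show ?thesis .
qed

lemma corr_coprime:
  fixes a b :: nat
  assumes "a > 0" "b > 0" "coprime a b"
  shows "integral\<^sup>L lborel (\<lambda>y. ind01 y * (gg (real a * y) * gg (real b * y))) = GG / (real a * real b)"
proof -
  have T1: "integral\<^sup>L lborel (\<lambda>y. ind01 y * (gg (real a * y) * gg (real b * y))) =
     integral\<^sup>L lborel (\<lambda>z. ind01 z * (gg z * ((\<Sum>j<a. gg (real b * ((z + real j) / real a))) / real a)))"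
    using transfer(1)[OF assms(1) per_gg gg_prod_int[OF assms(1,2)]] .
  also have "\<dots> = integral\<^sup>L lborel (\<lambda>z. ind01 z * (gg (real b * z) * gg (real 1 * z)) / real a)"
  proof (rule integral_cong_AE)
    show "AE z in lborel. ind01 z * (gg z * ((\<Sum>j<a. gg (real b * ((z + real j) / real a))) / real a)) =
        ind01 z * (gg (real b * z) * gg (real 1 * z)) / real a"
      using ae_sin_nz[OF assms(2)]
    proof (rule AE_mp, intro AE_I2 impI)
      fix z assume s: "sin (pi * (real b * z)) \<noteq> 0"
      have "(\<Sum>j<a. gg (real b * ((z + real j) / real a))) = gg (real b * z)"
        using sum_perm[OF assms(1,3)] prodform[OF assms(1) s] by simp
      thus "ind01 z * (gg z * ((\<Sum>j<a. gg (real b * ((z + real j) / real a))) / real a)) =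
        ind01 z * (gg (real b * z) * gg (real 1 * z)) / real a" by simp
    qed
  qed measurable
  also have "\<dots> = integral\<^sup>L lborel (\<lambda>z. ind01 z * (gg (real b * z) * gg (real 1 * z))) / real a"
    by simp
  also have "integral\<^sup>L lborel (\<lambda>z. ind01 z * (gg (real b * z) * gg (real 1 * z))) =
      integral\<^sup>L lborel (\<lambda>z. ind01 z * (gg z * ((\<Sum>j<b. gg ((z + real j) / real b)) / real b)))"
    using transfer(1)[OF assms(2) per_gg, of gg] gg_prod_int[OF assms(2), of 1] by simp
  also have "\<dots> = integral\<^sup>L lborel (\<lambda>z. ind01 z * (gg z)^2 / real b)"
  proof (rule integral_cong_AE)
    have ae1: "AE z in lborel. sin (pi * z) \<noteq> 0" using ae_sin_nz[of "1::nat"] by simp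
    show "AE z in lborel. ind01 z * (gg z * ((\<Sum>j<b. gg ((z + real j) / real b)) / real b)) = ind01 z * (gg z)^2 / real b"
      using ae1
    proof (rule AE_mp, intro AE_I2 impI)
      fix z assume s: "sin (pi * z) \<noteq> 0"
      have "(\<Sum>j<b. gg ((z + real j) / real b)) = gg z"
        using prodform[OF assms(2), of z] s by simp
      thus "ind01 z * (gg z * ((\<Sum>j<b. gg ((z + real j) / real b)) / real b)) = ind01 z * (gg z)^2 / real b"
        by (simp add: power2_eq_square)
    qed
  qed measurable
  also have "\<dots> = GG / real b" by (simp add: GG_def)
  finally show ?thesis by simp
qed

lemma corr_general:
  fixes a b :: nat
  assumes "a > 0" "b > 0"
  shows "integral\<^sup>L lborel (\<lambda>y. ind01 y * (gg (real a * y) * gg (real b * y))) =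
     GG * (real (gcd a b))^2 / (real a * real b)"
proof -
  define d where "d = gcd a b"
  define a' where "a' = a div d"
  define b' where "b' = b div d"
  have d0: "d > 0" using assms by (simp add: d_def)
  have ad: "a = d * a'" "b = d * b'" by (simp_all add: d_def a'_def b'_def)
  have a'0: "a' > 0" "b' > 0" using ad assms by auto
  have cop: "coprime a' b'" unfolding a'_def b'_def d_def using assms by (intro div_gcd_coprime) auto
  define H where "H = (\<lambda>x. gg (real a' * x) * gg (real b' * x))"
  have perH: "per H" unfolding per_def H_def
    using per_scale[OF per_gg, of a'] per_scale[OF per_gg, of b'] by (simp add: per_def)
  have iH: "integrable lborel (\<lambda>z. ind01 z * H z)" unfolding H_def by (rule gg_prod_int[OF a'0])
  have "integral\<^sup>L lborel (\<lambda>y. ind01 y * (gg (real a * y) * gg (real b * y))) =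
      integral\<^sup>L lborel (\<lambda>y. ind01 y * H (real d * y))"
    unfolding H_def ad by (simp add: ac_simps)
  also have "\<dots> = integral\<^sup>L lborel (\<lambda>z. ind01 z * H z)"
    by (rule L1_integrable(2)[OF d0 perH iH])
  also have "\<dots> = GG / (real a' * real b')" unfolding H_def by (rule corr_coprime[OF a'0 cop])
  also have "\<dots> = GG * (real d)^2 / (real a * real b)"
    using d0 unfolding ad by (simp add: power2_eq_square)
  finally show ?thesis by (simp add: d_def)
qed




definition an :: "nat \<Rightarrow> nat" where "an n = 2 ^ n - 1"
definition XX :: "nat \<Rightarrow> real \<Rightarrow> real" where "XX n \<xi> = gg (real (an n) * \<xi>)"

lemma an_pos: "n \<ge> 1 \<Longrightarrow> an n > 0"
  unfolding an_def using one_less_power[of "2::nat" n] by simp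

lemma real_an: "real (an n) = 2 ^ n - 1"
  unfolding an_def by (simp add: of_nat_diff)

lemma XX_meas[measurable]: "XX n \<in> borel_measurable borel"
  unfolding XX_def by measurable

definition dd :: "nat \<Rightarrow> nat \<Rightarrow> nat" where "dd k l = (if k \<le> l then l - k else k - l)"

lemma ratio_le:
  assumes "1 \<le> k" "k \<le> l"
  shows "real (an k) / real (an l) \<le> (1/2) ^ (l - k)"
proof -
  have l: "l = k + (l - k)" using assms by simp
  have p: "(2::real) ^ l = 2 ^ k * 2 ^ (l - k)" by (subst l) (simp add: power_add)
  have q: "(1::real) \<le> 2 ^ (l - k)" by simp
  have pos: "(0::real) < 2 ^ l - 1" using one_less_power[of "2::real" l] assms by simp
  have "(2 ^ k - 1) * 2 ^ (l - k) \<le> (2::real) ^ l - 1"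
    using p q by (simp add: algebra_simps)
  hence "(2 ^ k - 1) / (2 ^ l - 1) \<le> (1::real) / 2 ^ (l - k)"
    using pos by (simp add: field_simps)
  thus ?thesis by (simp add: real_an power_one_over)
qed

lemma corr_bound:
  assumes "1 \<le> k" "1 \<le> l"
  shows "integral\<^sup>L lborel (\<lambda>y. ind01 y * (XX k y * XX l y)) \<le> GG * (1/2) ^ (dd k l)"
proof -
  have gen: "integral\<^sup>L lborel (\<lambda>y. ind01 y * (XX k y * XX l y)) \<le> GG * (1/2) ^ (l - k)"
    if "1 \<le> k" "k \<le> l" "\<And>y. XX k y * XX l y = XX k' y * XX l' y" "k' = k \<and> l' = l \<or> k' = l \<and> l' = k" for k l k' l'
  proof -
    have a0: "an k > 0" "an l > 0" using that an_pos by auto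
    have "integral\<^sup>L lborel (\<lambda>y. ind01 y * (XX k y * XX l y)) = GG * (real (gcd (an k) (an l)))^2 / (real (an k) * real (an l))"
      unfolding XX_def by (rule corr_general[OF a0])
    also have "\<dots> \<le> GG * (real (an k))^2 / (real (an k) * real (an l))"
    proof -
      have "gcd (an k) (an l) \<le> an k" using a0 by (simp add: gcd_le1_nat)
      hence "(real (gcd (an k) (an l)))^2 \<le> (real (an k))^2" by (intro power_mono) auto
      thus ?thesis using GG_nonneg a0 by (intro divide_right_mono mult_left_mono) auto
    qed
    also have "\<dots> = GG * (real (an k) / real (an l))" using a0 by (simp add: power2_eq_square)
    also have "\<dots> \<le> GG * (1/2) ^ (l - k)"
      using ratio_le[OF that(1,2)] GG_nonneg by (intro mult_left_mono) auto
    finally show ?thesis .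
  qed
  show ?thesis
  proof (cases "k \<le> l")
    case True thus ?thesis using gen[of k l k l] assms by (simp add: dd_def)
  next
    case False
    have "integral\<^sup>L lborel (\<lambda>y. ind01 y * (XX k y * XX l y)) = integral\<^sup>L lborel (\<lambda>y. ind01 y * (XX l y * XX k y))"
      by (simp add: mult.commute)
    thus ?thesis using gen[of l k l k] assms False by (simp add: dd_def)
  qed
qed

lemma geom_set_le: "finite A \<Longrightarrow> (\<Sum>m\<in>A. (1/2::real) ^ m) \<le> 2"
proof -
  assume "finite A"
  have "(\<Sum>m\<in>A. (1/2::real) ^ m) \<le> (\<Sum>m. (1/2::real) ^ m)"
    by (rule sum_le_suminf) (auto simp: \<open>finite A\<close>)
  also have "\<dots> = 2" by (simp add: suminf_geometric)
  finally show ?thesis .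
qed

lemma dd_sum_le:
  assumes "finite I"
  shows "(\<Sum>l\<in>I. (1/2::real) ^ dd k l) \<le> 4"
proof -
  have split: "(\<Sum>l\<in>I. (1/2::real) ^ dd k l) = (\<Sum>l\<in>I \<inter> {k..}. (1/2) ^ (l - k)) + (\<Sum>l\<in>I \<inter> {..<k}. (1/2) ^ (k - l))"
  proof -
    have eqI: "(I \<inter> {k..}) \<union> (I \<inter> {..<k}) = I" by auto
    have "(\<Sum>l\<in>I. (1/2::real) ^ dd k l) = (\<Sum>l\<in>(I \<inter> {k..}) \<union> (I \<inter> {..<k}). (1/2) ^ dd k l)"
      by (simp only: eqI)
    also have "\<dots> = (\<Sum>l\<in>I \<inter> {k..}. (1/2) ^ dd k l) + (\<Sum>l\<in>I \<inter> {..<k}. (1/2) ^ dd k l)"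
      by (rule sum.union_disjoint) (use assms in auto)
    finally have "(\<Sum>l\<in>I. (1/2::real) ^ dd k l) = (\<Sum>l\<in>I \<inter> {k..}. (1/2) ^ dd k l) + (\<Sum>l\<in>I \<inter> {..<k}. (1/2) ^ dd k l)" .
    also have "(\<Sum>l\<in>I \<inter> {k..}. (1/2::real) ^ dd k l) = (\<Sum>l\<in>I \<inter> {k..}. (1/2) ^ (l - k))"
      by (rule sum.cong) (auto simp: dd_def)
    also have "(\<Sum>l\<in>I \<inter> {..<k}. (1/2::real) ^ dd k l) = (\<Sum>l\<in>I \<inter> {..<k}. (1/2) ^ (k - l))"
      by (rule sum.cong) (auto simp: dd_def)
    finally show ?thesis .
  qed
  have i1: "inj_on (\<lambda>l. l - k) (I \<inter> {k..})" by (auto simp: inj_on_def)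
  have i2: "inj_on (\<lambda>l. k - l) (I \<inter> {..<k})" by (auto simp: inj_on_def)
  have s1: "(\<Sum>l\<in>I \<inter> {k..}. (1/2::real) ^ (l - k)) \<le> 2"
    using sum.reindex[OF i1, of "\<lambda>m. (1/2::real) ^ m"] geom_set_le[of "(\<lambda>l. l - k) ` (I \<inter> {k..})"] assms by simp
  have s2: "(\<Sum>l\<in>I \<inter> {..<k}. (1/2::real) ^ (k - l)) \<le> 2"
    using sum.reindex[OF i2, of "\<lambda>m. (1/2::real) ^ m"] geom_set_le[of "(\<lambda>l. k - l) ` (I \<inter> {..<k})"] assms by simp
  show ?thesis using split s1 s2 by linarith
qed

definition SS :: "nat set \<Rightarrow> real \<Rightarrow> real" where "SS I \<xi> = (\<Sum>n\<in>I. XX n \<xi>)"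
definition BB :: "nat set \<Rightarrow> real \<Rightarrow> real" where "BB I \<xi> = (\<Sum>n\<in>I. \<bar>XX n \<xi>\<bar>)"

lemma XX_prod_int: "1 \<le> k \<Longrightarrow> 1 \<le> l \<Longrightarrow> integrable lborel (\<lambda>y. ind01 y * (XX k y * XX l y))"
  unfolding XX_def using an_pos by (intro gg_prod_int) auto

lemma XX_sq_int_eq: "1 \<le> k \<Longrightarrow> integral\<^sup>L lborel (\<lambda>y. ind01 y * (XX k y)^2) = GG"
proof -
  assume k: "1 \<le> k"
  have a0: "an k > 0" using an_pos k by auto
  have "integral\<^sup>L lborel (\<lambda>y. ind01 y * (XX k y)^2) = integral\<^sup>L lborel (\<lambda>y. ind01 y * (XX k y * XX k y))"
    by (simp add: power2_eq_square)
  also have "\<dots> = GG * (real (gcd (an k) (an k)))^2 / (real (an k) * real (an k))"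
    unfolding XX_def by (rule corr_general[OF a0 a0])
  also have "\<dots> = GG" using a0 by (simp add: power2_eq_square)
  finally show ?thesis .
qed

lemma var_S:
  assumes "finite I" "\<And>n. n \<in> I \<Longrightarrow> 1 \<le> n"
  shows "integrable lborel (\<lambda>y. ind01 y * (SS I y)^2)"
    and "integral\<^sup>L lborel (\<lambda>y. ind01 y * (SS I y)^2) \<le> 4 * GG * real (card I)"
proof -
  have e: "ind01 y * (SS I y)^2 = (\<Sum>k\<in>I. \<Sum>l\<in>I. ind01 y * (XX k y * XX l y))" for y
    unfolding SS_def power2_eq_square sum_product by (simp add: sum_distrib_left)
  show i: "integrable lborel (\<lambda>y. ind01 y * (SS I y)^2)"
    unfolding e using assms XX_prod_int by (intro Bochner_Integration.integrable_sum) auto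
  have "integral\<^sup>L lborel (\<lambda>y. ind01 y * (SS I y)^2) = (\<Sum>k\<in>I. \<Sum>l\<in>I. integral\<^sup>L lborel (\<lambda>y. ind01 y * (XX k y * XX l y)))"
    unfolding e using assms XX_prod_int
    by (subst Bochner_Integration.integral_sum, (intro Bochner_Integration.integrable_sum; auto))
       (intro sum.cong refl Bochner_Integration.integral_sum; auto)
  also have "\<dots> \<le> (\<Sum>k\<in>I. \<Sum>l\<in>I. GG * (1/2) ^ dd k l)"
    using assms corr_bound by (intro sum_mono) auto
  also have "\<dots> = (\<Sum>k\<in>I. GG * (\<Sum>l\<in>I. (1/2) ^ dd k l))" by (simp add: sum_distrib_left)
  also have "\<dots> \<le> (\<Sum>k\<in>I. GG * 4)"
    using dd_sum_le[OF assms(1)] GG_nonneg by (intro sum_mono mult_left_mono) auto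
  also have "\<dots> = 4 * GG * real (card I)" by simp
  finally show "integral\<^sup>L lborel (\<lambda>y. ind01 y * (SS I y)^2) \<le> 4 * GG * real (card I)" .
qed

lemma var_B:
  assumes "finite I" "\<And>n. n \<in> I \<Longrightarrow> 1 \<le> n"
  shows "integrable lborel (\<lambda>y. ind01 y * (BB I y)^2)"
    and "integral\<^sup>L lborel (\<lambda>y. ind01 y * (BB I y)^2) \<le> GG * (real (card I))^2"
proof -
  have isq: "integrable lborel (\<lambda>y. ind01 y * (XX k y)^2)" if "k \<in> I" for k
    using XX_prod_int[of k k] assms that by (simp add: power2_eq_square)
  have e: "ind01 y * (BB I y)^2 = (\<Sum>k\<in>I. \<Sum>l\<in>I. \<bar>ind01 y * (XX k y * XX l y)\<bar>)" for y
    unfolding BB_def power2_eq_square sum_product by (simp add: sum_distrib_left abs_mult indicator_def)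
  show "integrable lborel (\<lambda>y. ind01 y * (BB I y)^2)"
    unfolding e using assms XX_prod_int by (intro Bochner_Integration.integrable_sum integrable_abs) auto
  have b: "ind01 y * (BB I y)^2 \<le> real (card I) * (\<Sum>k\<in>I. ind01 y * (XX k y)^2)" for y
  proof -
    have "(BB I y)^2 \<le> (\<Sum>k\<in>I. (\<bar>XX k y\<bar>)^2) * real (card I)"
      unfolding BB_def by (rule sum_squared_le_sum_of_squares)
    thus ?thesis by (auto simp: indicator_def sum_distrib_left[symmetric] mult.commute)
  qed
  have "integral\<^sup>L lborel (\<lambda>y. ind01 y * (BB I y)^2) \<le> integral\<^sup>L lborel (\<lambda>y. real (card I) * (\<Sum>k\<in>I. ind01 y * (XX k y)^2))"
  proof (rule integral_mono)
    show "integrable lborel (\<lambda>y. ind01 y * (BB I y)^2)"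
      unfolding e using assms XX_prod_int by (intro Bochner_Integration.integrable_sum integrable_abs) auto
    show "integrable lborel (\<lambda>y. real (card I) * (\<Sum>k\<in>I. ind01 y * (XX k y)^2))"
      using isq by (intro integrable_mult_right Bochner_Integration.integrable_sum) auto
  qed (rule b)
  also have "\<dots> = real (card I) * (\<Sum>k\<in>I. integral\<^sup>L lborel (\<lambda>y. ind01 y * (XX k y)^2))"
    using isq by (simp add: Bochner_Integration.integral_sum)
  also have "\<dots> = real (card I) * (\<Sum>k\<in>I. GG)"
    using assms XX_sq_int_eq by simp
  also have "\<dots> = GG * (real (card I))^2" by (simp add: power2_eq_square)
  finally show "integral\<^sup>L lborel (\<lambda>y. ind01 y * (BB I y)^2) \<le> GG * (real (card I))^2" .
qed




definition YY :: "nat \<Rightarrow> real \<Rightarrow> real" where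
  "YY j \<xi> = ((SS {1..(Suc j)^2} \<xi>)^2 + (BB {(Suc j)^2<..(Suc (Suc j))^2} \<xi>)^2) / (real (Suc j))^4"

lemma SS_meas[measurable]: "SS I \<in> borel_measurable borel" unfolding SS_def by measurable
lemma BB_meas[measurable]: "BB I \<in> borel_measurable borel" unfolding BB_def by measurable
lemma YY_meas[measurable]: "YY j \<in> borel_measurable borel" unfolding YY_def by measurable

lemma YY_int:
  shows "integrable lborel (\<lambda>y. ind01 y * YY j y)"
    and "integral\<^sup>L lborel (\<lambda>y. ind01 y * YY j y) \<le> 13 * GG / (real (Suc j))^2"
proof -
  have f1: "finite {1..(Suc j)^2}" "\<And>n. n \<in> {1..(Suc j)^2} \<Longrightarrow> 1 \<le> n" by auto
  have f2: "finite {(Suc j)^2<..(Suc (Suc j))^2}" "\<And>n. n \<in> {(Suc j)^2<..(Suc (Suc j))^2} \<Longrightarrow> 1 \<le> n" by auto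
  have e: "ind01 y * YY j y = (ind01 y * (SS {1..(Suc j)^2} y)^2 + ind01 y * (BB {(Suc j)^2<..(Suc (Suc j))^2} y)^2) / (real (Suc j))^4" for y
    by (simp add: YY_def distrib_left)
  show "integrable lborel (\<lambda>y. ind01 y * YY j y)"
    unfolding e using var_S(1)[OF f1] var_B(1)[OF f2]
    by (intro integrable_divide_zero Bochner_Integration.integrable_add)
  have c1: "card {1..(Suc j)^2} = (Suc j)^2" by simp
  have c2: "card {(Suc j)^2<..(Suc (Suc j))^2} = 2 * j + 3" by (simp add: power2_eq_square)
  have "integral\<^sup>L lborel (\<lambda>y. ind01 y * YY j y) =
      (integral\<^sup>L lborel (\<lambda>y. ind01 y * (SS {1..(Suc j)^2} y)^2) + integral\<^sup>L lborel (\<lambda>y. ind01 y * (BB {(Suc j)^2<..(Suc (Suc j))^2} y)^2)) / (real (Suc j))^4"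
    unfolding e using var_S(1)[OF f1] var_B(1)[OF f2] by simp
  also have "\<dots> \<le> (4 * GG * (real (Suc j))^2 + GG * (real (2 * j + 3))^2) / (real (Suc j))^4"
    using var_S(2)[OF f1] var_B(2)[OF f2] unfolding c1 c2 by (intro divide_right_mono add_mono) auto
  also have "\<dots> \<le> (4 * GG * (real (Suc j))^2 + GG * (9 * (real (Suc j))^2)) / (real (Suc j))^4"
  proof -
    have h1: "real (2 * j + 3) \<le> 3 * real (Suc j)" by simp
    have "(real (2 * j + 3))^2 \<le> (3 * real (Suc j))^2" by (rule power_mono[OF h1]) simp
    also have "\<dots> = 9 * (real (Suc j))^2" by (simp only: power_mult_distrib) simp
    finally have "(real (2 * j + 3))^2 \<le> 9 * (real (Suc j))^2" .
    thus ?thesis using GG_nonneg by (intro divide_right_mono add_mono mult_left_mono) auto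
  qed
  also have "\<dots> = 13 * GG / (real (Suc j))^2"
  proof -
    define x where "x = real (Suc j)"
    have x0: "x > 0" by (simp add: x_def)
    have x4: "x^4 = x^2 * x^2" by (simp flip: power_add)
    have num: "4 * GG * x^2 + GG * (9 * x^2) = (13 * GG) * x^2" by (simp add: algebra_simps)
    have "(4 * GG * x^2 + GG * (9 * x^2)) / x^4 = (13 * GG) * x^2 / (x^2 * x^2)"
      by (simp only: x4 num)
    also have "\<dots> = 13 * GG / x^2" using x0 by (simp add: field_simps)
    finally show ?thesis by (simp add: x_def)
  qed
  finally show "integral\<^sup>L lborel (\<lambda>y. ind01 y * YY j y) \<le> 13 * GG / (real (Suc j))^2" .
qed

lemma YY_nonneg: "0 \<le> YY j y" unfolding YY_def by simp

lemma AE_YY: "AE \<xi> in lborel. \<xi> \<in> {0..<1} \<longrightarrow> (\<lambda>j. YY j \<xi>) \<longlonglongrightarrow> 0"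
proof -
  have sumc: "summable (\<lambda>j. 13 * GG / (real (Suc j))^2)"
  proof -
    have "summable (\<lambda>n. inverse (real n ^ 2))" by (rule inverse_power_summable) simp
    hence "summable (\<lambda>n. inverse (real (Suc n) ^ 2))" by (subst summable_Suc_iff)
    hence "summable (\<lambda>n. (13 * GG) * inverse (real (Suc n) ^ 2))" by (rule summable_mult)
    thus ?thesis by (simp add: divide_inverse)
  qed
  have m: "\<And>j. (\<lambda>\<xi>. ennreal (ind01 \<xi> * YY j \<xi>)) \<in> borel_measurable lborel" by measurable
  have msum: "(\<lambda>\<xi>. \<Sum>j. ennreal (ind01 \<xi> * YY j \<xi>)) \<in> borel_measurable lborel"
    by (rule borel_measurable_suminf_order[OF m])
  have nn: "(\<integral>\<^sup>+ \<xi>. (\<Sum>j. ennreal (ind01 \<xi> * YY j \<xi>)) \<partial>lborel) = (\<Sum>j. \<integral>\<^sup>+ \<xi>. ennreal (ind01 \<xi> * YY j \<xi>) \<partial>lborel)"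
    by (rule nn_integral_suminf[OF m])
  also have "\<dots> = (\<Sum>j. ennreal (integral\<^sup>L lborel (\<lambda>\<xi>. ind01 \<xi> * YY j \<xi>)))"
    using YY_int(1) by (intro suminf_cong nn_integral_eq_integral AE_I2) (auto simp: YY_nonneg indicator_def)
  also have "\<dots> \<le> (\<Sum>j. ennreal (13 * GG / (real (Suc j))^2))"
    by (intro suminf_le summableI ennreal_leI YY_int(2))
  also have "\<dots> < top"
  proof -
    have "(\<Sum>j. ennreal (13 * GG / (real (Suc j))^2)) \<noteq> top"
      by (rule ennreal_suminf_neq_top[OF sumc]) (use GG_nonneg in simp)
    thus ?thesis by (simp only: less_top)
  qed
  finally have fin: "(\<integral>\<^sup>+ \<xi>. (\<Sum>j. ennreal (ind01 \<xi> * YY j \<xi>)) \<partial>lborel) \<noteq> \<infinity>" by simp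
  have "AE \<xi> in lborel. (\<Sum>j. ennreal (ind01 \<xi> * YY j \<xi>)) \<noteq> \<infinity>"
    by (rule nn_integral_PInf_AE[OF msum fin])
  thus ?thesis
  proof (rule AE_mp, intro AE_I2 impI)
    fix \<xi> :: real
    assume a: "(\<Sum>j. ennreal (ind01 \<xi> * YY j \<xi>)) \<noteq> \<infinity>" and x: "\<xi> \<in> {0..<1}"
    have "(\<Sum>j. ennreal (YY j \<xi>)) \<noteq> top" using a x by simp
    hence "summable (\<lambda>j. YY j \<xi>)" by (intro summable_suminf_not_top) (auto simp: YY_nonneg)
    thus "(\<lambda>j. YY j \<xi>) \<longlonglongrightarrow> 0" by (rule summable_LIMSEQ_zero)
  qed
qed




lemma SS_split:
  assumes "m \<le> N"
  shows "SS {1..N} \<xi> = SS {1..m} \<xi> + SS {m<..N} \<xi>"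
proof -
  have "{1..N} = {1..m} \<union> {m<..N}" using assms by auto
  moreover have "{1..m} \<inter> {m<..N} = {}" by auto
  ultimately show ?thesis unfolding SS_def by (simp add: sum.union_disjoint)
qed

lemma abs_SS_le_BB: "\<bar>SS I \<xi>\<bar> \<le> BB I \<xi>"
  unfolding SS_def BB_def by (rule sum_abs)

lemma BB_mono: "finite J \<Longrightarrow> I \<subseteq> J \<Longrightarrow> BB I \<xi> \<le> BB J \<xi>"
  unfolding BB_def by (rule sum_mono2) auto

lemma conv01:
  assumes Y: "(\<lambda>j. YY j \<xi>) \<longlonglongrightarrow> 0"
  shows "(\<lambda>N. SS {1..N} \<xi> / real N) \<longlonglongrightarrow> 0"
proof -
  define A where "A = (\<lambda>j. SS {1..(Suc j)^2} \<xi> / (real (Suc j))^2)"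
  define B where "B = (\<lambda>j. BB {(Suc j)^2<..(Suc (Suc j))^2} \<xi> / (real (Suc j))^2)"
  have sq: "(\<lambda>j. sqrt (YY j \<xi>)) \<longlonglongrightarrow> 0" using tendsto_real_sqrt[OF Y] by simp
  have Ale: "(A j)^2 \<le> YY j \<xi>" and Ble: "(B j)^2 \<le> YY j \<xi>" for j
  proof -
    have "(A j)^2 = (SS {1..(Suc j)^2} \<xi>)^2 / (real (Suc j))^4"
      by (simp add: A_def power_divide power_mult[symmetric])
    also have "\<dots> \<le> YY j \<xi>" unfolding YY_def by (intro divide_right_mono) auto
    finally show "(A j)^2 \<le> YY j \<xi>" .
    have "(B j)^2 = (BB {(Suc j)^2<..(Suc (Suc j))^2} \<xi>)^2 / (real (Suc j))^4"
      by (simp add: B_def power_divide power_mult[symmetric])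
    also have "\<dots> \<le> YY j \<xi>" unfolding YY_def by (intro divide_right_mono) auto
    finally show "(B j)^2 \<le> YY j \<xi>" .
  qed
  have A0: "A \<longlonglongrightarrow> 0"
  proof (rule Lim_null_comparison[OF _ sq], intro always_eventually allI)
    fix j show "norm (A j) \<le> sqrt (YY j \<xi>)" using real_sqrt_le_mono[OF Ale[of j]] by simp
  qed
  have B0: "B \<longlonglongrightarrow> 0"
  proof (rule Lim_null_comparison[OF _ sq], intro always_eventually allI)
    fix j show "norm (B j) \<le> sqrt (YY j \<xi>)" using real_sqrt_le_mono[OF Ble[of j]] by simp
  qed
  define u where "u = (\<lambda>j. \<bar>A j\<bar> + B j)"
  have u0: "u \<longlonglongrightarrow> 0" unfolding u_def using tendsto_add[OF tendsto_rabs_zero[OF A0] B0] by simp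
  define jf where "jf = (\<lambda>N. floor_sqrt N - 1)"
  have fj: "filterlim jf at_top sequentially"
    unfolding filterlim_at_top
  proof (intro allI eventually_sequentiallyI)
    fix M N :: nat assume "(Suc M)^2 \<le> N"
    hence "Suc M \<le> floor_sqrt N" by (rule le_floor_sqrtI)
    thus "M \<le> jf N" by (simp add: jf_def)
  qed
  have uj: "(\<lambda>N. u (jf N)) \<longlonglongrightarrow> 0" by (rule filterlim_compose[OF u0 fj])
  show ?thesis
  proof (rule Lim_null_comparison[OF _ uj], rule eventually_sequentiallyI)
    fix N :: nat assume N1: "1 \<le> N"
    define m where "m = (Suc (jf N))^2"
    have sj: "Suc (jf N) = floor_sqrt N" using N1 by (simp add: jf_def floor_sqrt_greater_zero_iff)
    have mN: "m \<le> N" unfolding m_def sj by (rule floor_sqrt_power2_le)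
    have Nm: "N \<le> (Suc (Suc (jf N)))^2" unfolding sj using Suc_floor_sqrt_power2_gt[of N] by simp
    have m1: "1 \<le> m" by (simp add: m_def)
    have "\<bar>SS {1..N} \<xi>\<bar> \<le> \<bar>SS {1..m} \<xi>\<bar> + BB {m<..(Suc (Suc (jf N)))^2} \<xi>"
    proof -
      have "\<bar>SS {1..N} \<xi>\<bar> \<le> \<bar>SS {1..m} \<xi>\<bar> + \<bar>SS {m<..N} \<xi>\<bar>" using SS_split[OF mN] by simp
      also have "\<bar>SS {m<..N} \<xi>\<bar> \<le> BB {m<..N} \<xi>" by (rule abs_SS_le_BB)
      also have "BB {m<..N} \<xi> \<le> BB {m<..(Suc (Suc (jf N)))^2} \<xi>" using Nm by (intro BB_mono) auto
      finally show ?thesis by simp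
    qed
    hence "\<bar>SS {1..N} \<xi>\<bar> / real N \<le> (\<bar>SS {1..m} \<xi>\<bar> + BB {m<..(Suc (Suc (jf N)))^2} \<xi>) / real N"
      by (intro divide_right_mono) auto
    also have "\<dots> \<le> (\<bar>SS {1..m} \<xi>\<bar> + BB {m<..(Suc (Suc (jf N)))^2} \<xi>) / real m"
    proof (rule divide_left_mono)
      show "0 \<le> \<bar>SS {1..m} \<xi>\<bar> + BB {m<..(Suc (Suc (jf N)))^2} \<xi>"
        using abs_SS_le_BB[of "{m<..(Suc (Suc (jf N)))^2}" \<xi>] by linarith
      show "real m \<le> real N" using mN by simp
      show "0 < real N * real m" using m1 N1 by simp
    qed
    also have "\<dots> = u (jf N)"
      by (simp add: u_def A_def B_def m_def add_divide_distrib abs_divide)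
    finally show "norm (SS {1..N} \<xi> / real N) \<le> u (jf N)" by (simp add: abs_divide)
  qed
qed

definition Pconv :: "real \<Rightarrow> bool" where
  "Pconv \<xi> \<longleftrightarrow> (\<lambda>N. (\<Sum>n=1..N. ln \<bar>sin (pi * (2 ^ n * \<xi> - \<xi>))\<bar>) / real N) \<longlonglongrightarrow> - ln 2"

lemma term_eq: "ln \<bar>sin (pi * (2 ^ n * \<xi> - \<xi>))\<bar> = XX n \<xi> - ln 2"
proof -
  have "2 ^ n * \<xi> - \<xi> = real (an n) * \<xi>" by (simp add: real_an algebra_simps)
  thus ?thesis by (simp add: XX_def gg_def logsin_def)
qed

lemma Pconv_of: assumes "(\<lambda>j. YY j \<xi>) \<longlonglongrightarrow> 0" shows "Pconv \<xi>"
proof -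
  have c: "(\<lambda>N. SS {1..N} \<xi> / real N + (- ln 2)) \<longlonglongrightarrow> 0 + (- ln 2)"
    by (intro tendsto_add conv01[OF assms] tendsto_const)
  have ev: "\<forall>\<^sub>F N in sequentially. SS {1..N} \<xi> / real N + (- ln 2) = (\<Sum>n=1..N. ln \<bar>sin (pi * (2 ^ n * \<xi> - \<xi>))\<bar>) / real N"
  proof (rule eventually_sequentiallyI)
    fix N :: nat assume "1 \<le> N"
    have "(\<Sum>n=1..N. ln \<bar>sin (pi * (2 ^ n * \<xi> - \<xi>))\<bar>) = SS {1..N} \<xi> - real N * ln 2"
      by (simp add: term_eq SS_def sum_subtractf)
    thus "SS {1..N} \<xi> / real N + (- ln 2) = (\<Sum>n=1..N. ln \<bar>sin (pi * (2 ^ n * \<xi> - \<xi>))\<bar>) / real N"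
      using \<open>1 \<le> N\<close> by (simp add: field_simps)
  qed
  show ?thesis unfolding Pconv_def using Lim_transform_eventually[OF c ev] by simp
qed

lemma Pconv_int: "Pconv (\<xi> + of_int k) \<longleftrightarrow> Pconv \<xi>"
proof -
  have "ln \<bar>sin (pi * (2 ^ n * (\<xi> + of_int k) - (\<xi> + of_int k)))\<bar> = ln \<bar>sin (pi * (2 ^ n * \<xi> - \<xi>))\<bar>" for n
  proof -
    have "2 ^ n * (\<xi> + of_int k) - (\<xi> + of_int k) = (2 ^ n * \<xi> - \<xi>) + of_int ((2 ^ n - 1) * k)"
      by (simp add: algebra_simps)
    hence "logsin (2 ^ n * (\<xi> + of_int k) - (\<xi> + of_int k)) = logsin ((2 ^ n * \<xi> - \<xi>) + of_int ((2 ^ n - 1) * k))"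
      by (rule arg_cong)
    also have "\<dots> = logsin (2 ^ n * \<xi> - \<xi>)" by (rule logsin_int)
    finally have "logsin (2 ^ n * (\<xi> + of_int k) - (\<xi> + of_int k)) = logsin (2 ^ n * \<xi> - \<xi>)" .
    thus ?thesis by (simp add: logsin_def)
  qed
  thus ?thesis unfolding Pconv_def by simp
qed

lemma AE_Pconv01: "AE \<xi> in lborel. \<xi> \<in> {0..<1} \<longrightarrow> Pconv \<xi>"
  using AE_YY by (rule AE_mp) (auto intro!: AE_I2 Pconv_of)

lemma AE_Pconv: "AE \<xi> in lborel. Pconv \<xi>"
proof -
  obtain N where N0: "{x \<in> space lborel. \<not> (x \<in> {0..<1} \<longrightarrow> Pconv x)} \<subseteq> N"
      "emeasure lborel N = 0" "N \<in> sets lborel"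
    using AE_Pconv01 by (rule AE_E)
  have N: "{x \<in> space lborel. \<not> (x \<in> {0..<1} \<longrightarrow> Pconv x)} \<subseteq> N" "N \<in> null_sets lborel"
    using N0 by (auto simp: null_sets_def)
  have shiftnull: "((+) c) -` N \<in> null_sets lborel" for c :: real
  proof -
    have Nb: "N \<in> sets borel" using N(2) by (simp add: null_sets_def)
    have "emeasure lborel (((+) c) -` N) = emeasure (distr lborel borel ((+) c)) N"
      using Nb by (subst emeasure_distr) auto
    also have "\<dots> = emeasure lborel N" by (simp add: lborel_distr_plus)
    also have "\<dots> = 0" using N(2) by auto
    finally have "emeasure lborel (((+) c) -` N) = 0" .
    moreover have "((+) c) -` N \<inter> space borel \<in> sets borel"
      by (rule measurable_sets[OF _ Nb]) measurable
    ultimately show ?thesis by (auto simp: null_sets_def)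
  qed
  have each: "AE \<xi> in lborel. \<xi> \<in> {of_int k..<of_int k + 1} \<longrightarrow> Pconv \<xi>" for k :: int
  proof (rule AE_I')
    show "((+) (- of_int k)) -` N \<in> null_sets lborel" by (rule shiftnull)
    show "{x \<in> space lborel. \<not> (x \<in> {of_int k..<of_int k + 1} \<longrightarrow> Pconv x)} \<subseteq> (+) (- of_int k) -` N"
    proof (intro subsetI)
      fix x assume "x \<in> {x \<in> space lborel. \<not> (x \<in> {of_int k..<of_int k + 1} \<longrightarrow> Pconv x)}"
      hence x: "x \<in> {of_int k..<of_int k + 1}" "\<not> Pconv x" by auto
      have "\<not> Pconv (x + of_int (- k))" using x(2) Pconv_int[of x "- k"] by simp
      moreover have "x + of_int (- k) \<in> {0..<1}" using x(1) by auto
      ultimately have "x + of_int (- k) \<in> N" using N(1) by auto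
      thus "x \<in> (+) (- of_int k) -` N" by (simp add: add.commute)
    qed
  qed
  have "AE \<xi> in lborel. \<forall>k\<in>(UNIV :: int set). \<xi> \<in> {of_int k..<of_int k + 1} \<longrightarrow> Pconv \<xi>"
    using each by (subst AE_ball_countable) auto
  thus ?thesis
  proof (rule AE_mp, intro AE_I2 impI)
    fix \<xi> :: real assume a: "\<forall>k\<in>(UNIV :: int set). \<xi> \<in> {of_int k..<of_int k + 1} \<longrightarrow> Pconv \<xi>"
    have "\<xi> \<in> {of_int \<lfloor>\<xi>\<rfloor>..<of_int \<lfloor>\<xi>\<rfloor> + 1}" by auto
    thus "Pconv \<xi>" using a by blast
  qed
qed




lemma per_logsin: "per logsin" by (simp add: per_def logsin_one)

lemma logsin_int01: "integrable lborel (\<lambda>x. ind01 x * logsin x)"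
proof -
  have i: "integrable lborel (\<lambda>x. ind01 x * (logsin x)^2 + ind01 x * 1)"
    using logsin_sq_int int01c[of 1] by (intro Bochner_Integration.integrable_add) auto
  show ?thesis
  proof (rule Bochner_Integration.integrable_bound[OF i], measurable, rule AE_I2)
    fix x :: real
    have "\<bar>logsin x\<bar> \<le> (logsin x)^2 + 1"
    proof (cases "\<bar>logsin x\<bar> \<le> 1")
      case True thus ?thesis using zero_le_power2[of "logsin x"] by linarith
    next
      case False
      hence "\<bar>logsin x\<bar> * 1 \<le> \<bar>logsin x\<bar> * \<bar>logsin x\<bar>" by (intro mult_left_mono) auto
      thus ?thesis by (simp add: power2_eq_square)
    qed
    thus "norm (ind01 x * logsin x) \<le> norm (ind01 x * (logsin x)^2 + ind01 x * 1)"
      by (auto simp: indicator_def abs_mult)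
  qed
qed

lemma logsin_int_big: "integrable lborel (\<lambda>z. indicator {-2..<2} z * logsin z)"
proof -
  have "integrable lborel (\<lambda>z. indicator {-2..<(-2) + real 4} z * logsin z)"
  proof (rule conjunct1[OF split_integral])
    fix j :: nat
    have "logsin (z + -2 + real j) = logsin z" for z
      using logsin_int[of z "int j - 2"] by (simp add: algebra_simps)
    thus "integrable lborel (\<lambda>z. ind01 z * logsin (z + -2 + real j))"
      using logsin_int01 by simp
  qed
  thus ?thesis by simp
qed

lemma absF_set_integrable:
  assumes "0 < \<delta>" "\<delta> < 1"
  shows "set_integrable lborel {0..1} (\<lambda>x. \<bar>logsin (x + \<delta>) - logsin x\<bar>)"
proof -
  have i1: "integrable lborel (\<lambda>x. indicator {-2..<2} (\<delta> + 1 * x) * logsin (\<delta> + 1 * x))"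
    by (rule lborel_integrable_real_affine[OF logsin_int_big]) simp
  have i: "integrable lborel (\<lambda>x. \<bar>indicator {-2..<2} (\<delta> + 1 * x) * logsin (\<delta> + 1 * x)\<bar> + \<bar>indicator {-2..<2} x * logsin x\<bar>)"
    using i1 logsin_int_big by (intro Bochner_Integration.integrable_add integrable_abs)
  show ?thesis unfolding set_integrable_def
  proof (rule Bochner_Integration.integrable_bound[OF i], measurable, rule AE_I2)
    fix x :: real
    show "norm (indicator {0..1} x *\<^sub>R \<bar>logsin (x + \<delta>) - logsin x\<bar>) \<le>
      norm (\<bar>indicator {-2..<2} (\<delta> + 1 * x) * logsin (\<delta> + 1 * x)\<bar> + \<bar>indicator {-2..<2} x * logsin x\<bar>)"
    proof (cases "x \<in> {0..1}")
      case True
      hence "indicator {-2..<2} (\<delta> + 1 * x) = (1::real)" "indicator {-2..<2} x = (1::real)"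
        using assms by (auto simp: indicator_def)
      thus ?thesis using True by (simp add: add.commute)
    next
      case False
      hence z: "indicator {0..1} x = (0::real)" by (simp add: indicator_def)
      show ?thesis by (simp only: z scale_zero_left norm_zero norm_ge_zero)
    qed
  qed
qed

lemma omega1_eq:
  assumes "0 < \<delta>" "\<delta> < 1"
  shows "omega1 logsin \<delta> = integral {0..1} (\<lambda>x. \<bar>logsin (x + \<delta>) - logsin x\<bar>)"
    and "(\<lambda>x. \<bar>logsin (x + \<delta>) - logsin x\<bar>) integrable_on {0..1}"
  using set_borel_integral_eq_integral[OF absF_set_integrable[OF assms]] unfolding omega1_def by auto




lemma hderiv:
  assumes "0 < t" "t < 1"
  shows "((\<lambda>t. ln (sin (pi * t))) has_real_derivative (pi * cos (pi * t) / sin (pi * t))) (at t)"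
proof -
  have s: "sin (pi * t) > 0" using assms by (intro sin_gt_zero) auto
  show ?thesis using s by (auto intro!: derivative_eq_intros simp: field_simps)
qed

lemma cot_bound:
  assumes "0 < t" "t < 1"
  shows "\<bar>pi * cos (pi * t) / sin (pi * t)\<bar> \<le> 1 / t + 1 / (1 - t)"
proof -
  have key: "0 \<le> pi * cos (pi * s) / sin (pi * s) \<and> pi * cos (pi * s) / sin (pi * s) \<le> 1 / s"
    if "0 < s" "s \<le> 1/2" for s
  proof -
    have sp: "sin (pi * s) > 0" using that by (intro sin_gt_zero) auto
    have ps: "0 < pi * s" using that by simp
    have ps2: "pi * s \<le> pi * (1/2)" using that by (intro mult_left_mono) auto
    have cp: "cos (pi * s) \<ge> 0"
      by (rule cos_ge_zero) (use ps ps2 in linarith)+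
    have "pi * s * cos (pi * s) \<le> sin (pi * s)" using that by (intro xcos_le_sin) auto
    hence "pi * cos (pi * s) / sin (pi * s) \<le> 1 / s" using sp that by (simp add: field_simps)
    moreover have "0 \<le> pi * cos (pi * s) / sin (pi * s)" using sp cp by simp
    ultimately show ?thesis by simp
  qed
  show ?thesis
  proof (cases "t \<le> 1/2")
    case True
    have a: "0 \<le> 1 / (1 - t)" using assms by simp
    have k: "0 \<le> pi * cos (pi * t) / sin (pi * t)" "pi * cos (pi * t) / sin (pi * t) \<le> 1 / t"
      using key[of t] True assms by auto
    have "\<bar>pi * cos (pi * t) / sin (pi * t)\<bar> = pi * cos (pi * t) / sin (pi * t)"
      by (rule abs_of_nonneg[OF k(1)])
    thus ?thesis using a k(2) by linarith
  next
    case False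
    define s where "s = 1 - t"
    have s: "0 < s" "s \<le> 1/2" using False assms by (auto simp: s_def)
    have c: "cos (pi * t) = - cos (pi * s)" by (simp add: s_def right_diff_distrib cos_diff)
    have si: "sin (pi * t) = sin (pi * s)" by (simp add: s_def right_diff_distrib sin_diff)
    have "\<bar>pi * cos (pi * t) / sin (pi * t)\<bar> = \<bar>pi * cos (pi * s) / sin (pi * s)\<bar>"
      by (simp add: c si)
    also have "\<dots> = pi * cos (pi * s) / sin (pi * s)"
      using key[OF s] by (intro abs_of_nonneg) simp
    also have "\<dots> \<le> 1 / s" using key[OF s] by simp
    finally have "\<bar>pi * cos (pi * t) / sin (pi * t)\<bar> \<le> 1 / (1 - t)" by (simp add: s_def)
    moreover have "0 \<le> 1 / t" using assms by simp
    ultimately show ?thesis by linarith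
  qed
qed

lemma F_mvt:
  assumes "0 < x" "0 < \<delta>" "x + \<delta> < 1"
  obtains z where "x < z" "z < x + \<delta>"
    "logsin (x + \<delta>) - logsin x = \<delta> * (pi * cos (pi * z) / sin (pi * z))"
proof -
  have "\<exists>z>x. z < x + \<delta> \<and> ln (sin (pi * (x + \<delta>))) - ln (sin (pi * x)) = (x + \<delta> - x) * (pi * cos (pi * z) / sin (pi * z))"
    by (rule MVT2) (use assms in \<open>auto intro!: hderiv\<close>)
  then obtain z where z: "x < z" "z < x + \<delta>" "ln (sin (pi * (x + \<delta>))) - ln (sin (pi * x)) = \<delta> * (pi * cos (pi * z) / sin (pi * z))"
    by auto
  moreover have "logsin (x + \<delta>) = ln (sin (pi * (x + \<delta>)))" "logsin x = ln (sin (pi * x))"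
    using assms by (auto intro!: logsin_pos)
  ultimately show ?thesis using that by auto
qed

lemma F_lower:
  assumes "0 < \<delta>" "\<delta> \<le> 1/16" "\<delta> \<le> x" "x \<le> 1/4"
  shows "\<delta> / (4 * x) \<le> logsin (x + \<delta>) - logsin x"
proof -
  obtain z where z: "x < z" "z < x + \<delta>" "logsin (x + \<delta>) - logsin x = \<delta> * (pi * cos (pi * z) / sin (pi * z))"
    using F_mvt[of x \<delta>] assms by auto
  have z0: "0 < z" "z \<le> 1/3" using z assms by auto
  have sp: "sin (pi * z) > 0" using z0 by (intro sin_gt_zero) auto
  have sle: "sin (pi * z) \<le> pi * z" using z0 by (intro sin_x_le_x) auto
  have "cos (pi * z) \<ge> cos (pi / 3)" using z0 by (intro cos_monotone_0_pi_le) auto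
  hence cz: "cos (pi * z) \<ge> 1/2" by (simp add: cos_60)
  have "pi * cos (pi * z) / sin (pi * z) \<ge> pi * (1/2) / (pi * z)"
    using sp sle cz z0 by (intro frac_le) auto
  hence "pi * cos (pi * z) / sin (pi * z) \<ge> 1 / (2 * z)" by simp
  moreover have "1 / (2 * z) \<ge> 1 / (4 * x)" using z assms by (intro divide_left_mono) auto
  ultimately have "pi * cos (pi * z) / sin (pi * z) \<ge> 1 / (4 * x)" by linarith
  hence "\<delta> * (pi * cos (pi * z) / sin (pi * z)) \<ge> \<delta> * (1 / (4 * x))"
    using assms by (intro mult_left_mono) auto
  thus ?thesis using z by simp
qed

lemma F_mid:
  assumes "0 < \<delta>" "\<delta> \<le> x" "x + \<delta> < 1"
  shows "\<bar>logsin (x + \<delta>) - logsin x\<bar> \<le> \<delta> * (1 / x + 1 / (1 - \<delta> - x))"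
proof -
  obtain z where z: "x < z" "z < x + \<delta>" "logsin (x + \<delta>) - logsin x = \<delta> * (pi * cos (pi * z) / sin (pi * z))"
    using F_mvt[of x \<delta>] assms by auto
  have "\<bar>pi * cos (pi * z) / sin (pi * z)\<bar> \<le> 1 / z + 1 / (1 - z)"
    using z assms by (intro cot_bound) auto
  also have "\<dots> \<le> 1 / x + 1 / (1 - \<delta> - x)"
    using z assms by (intro add_mono divide_left_mono) auto
  finally have A: "\<bar>pi * cos (pi * z) / sin (pi * z)\<bar> \<le> 1 / x + 1 / (1 - \<delta> - x)" .
  have "\<bar>\<delta> * (pi * cos (pi * z) / sin (pi * z))\<bar> = \<delta> * \<bar>pi * cos (pi * z) / sin (pi * z)\<bar>"
    using assms by (simp add: abs_mult)
  also have "\<dots> \<le> \<delta> * (1 / x + 1 / (1 - \<delta> - x))"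
    by (rule mult_left_mono[OF A]) (use assms in simp)
  finally have "\<bar>\<delta> * (pi * cos (pi * z) / sin (pi * z))\<bar> \<le> \<delta> * (1 / x + 1 / (1 - \<delta> - x))" .
  thus ?thesis using z by simp
qed

lemma ln_le_sqrt: "0 < y \<Longrightarrow> ln y \<le> 2 * sqrt y"
proof -
  assume y: "0 < y"
  have "ln (sqrt y) \<le> sqrt y - 1" using y by (intro ln_le_minus_one) auto
  moreover have "ln (sqrt y) = ln y / 2" using y by (simp add: ln_sqrt)
  ultimately show ?thesis by simp
qed

lemma neg_ln_small:
  assumes "0 < t" "t \<le> \<delta>"
  shows "- ln t \<le> - ln \<delta> + 2 * sqrt \<delta> / sqrt t"
proof -
  have "- ln t = - ln \<delta> + ln (\<delta> / t)" using assms by (simp add: ln_div)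
  also have "ln (\<delta> / t) \<le> 2 * sqrt (\<delta> / t)" using assms by (intro ln_le_sqrt) auto
  also have "sqrt (\<delta> / t) = sqrt \<delta> / sqrt t" by (simp add: real_sqrt_divide)
  finally show ?thesis by simp
qed

lemma neg_ln_big: fixes \<delta> t :: real assumes "0 < \<delta>" "\<delta> \<le> t" shows "- ln t \<le> - ln \<delta>"
proof -
  have "0 < t" using assms by linarith
  thus ?thesis using assms by simp
qed

lemma absdiff_le: "a \<le> (0::real) \<Longrightarrow> b \<le> 0 \<Longrightarrow> \<bar>a - b\<bar> \<le> - a - b" by linarith




lemma nf_a: "0 < y \<Longrightarrow> y \<le> 1/2 \<Longrightarrow> - logsin y \<le> - ln y" by (rule neg_logsin_le)
lemma nf_b: "1/2 \<le> y \<Longrightarrow> y < 1 \<Longrightarrow> - logsin y \<le> - ln (1 - y)" by (rule neg_logsin_le')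
lemma logsin_0: "logsin 0 = 0" by (simp add: logsin_def)
lemma logsin_1: "logsin 1 = 0" by (simp add: logsin_def)

context
  fixes \<delta> :: real
  assumes d0: "0 < \<delta>" and d1: "\<delta> \<le> 1/16"
begin

definition "LL = - ln \<delta>"

lemma LL_nonneg: "0 \<le> LL" unfolding LL_def using d0 d1 by simp

lemma LL_ge1: "1 \<le> LL"
proof -
  have "exp 1 \<le> (16::real)" using exp_le by simp
  hence "1 \<le> ln (16::real)" by (metis exp_gt_zero ln_exp ln_le_cancel_iff zero_less_numeral)
  moreover have "ln (1/16) \<ge> ln \<delta>" using d0 d1 by simp
  moreover have "ln (1/16::real) = - ln 16" by (simp add: ln_div)
  ultimately show ?thesis unfolding LL_def by linarith
qed

lemma LL_ge2ln4: "2 * ln 4 \<le> LL"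
proof -
  have "ln (1/16) \<ge> ln \<delta>" using d0 d1 by simp
  moreover have "ln (1/16::real) = - (2 * ln 4)"
  proof -
    have "ln (16::real) = ln 4 + ln 4" using ln_mult[of "4::real" 4] by simp
    thus ?thesis by (simp add: ln_div)
  qed
  ultimately show ?thesis unfolding LL_def by linarith
qed

lemma small_bound: "0 \<le> t \<Longrightarrow> t \<le> \<delta> \<Longrightarrow> t \<le> 1/2 \<Longrightarrow> - logsin t \<le> LL + 2 * sqrt \<delta> / sqrt t"
proof -
  assume t: "0 \<le> t" "t \<le> \<delta>" "t \<le> 1/2"
  show ?thesis
  proof (cases "t = 0")
    case True thus ?thesis using LL_nonneg by (simp add: logsin_0)
  next
    case False
    hence "- logsin t \<le> - ln t" using t by (intro nf_a) auto
    also have "\<dots> \<le> LL + 2 * sqrt \<delta> / sqrt t" unfolding LL_def using t False by (intro neg_ln_small) auto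
    finally show ?thesis .
  qed
qed

lemma bigger_bound: "\<delta> \<le> t \<Longrightarrow> t \<le> 1/2 \<Longrightarrow> - logsin t \<le> LL"
proof -
  assume t: "\<delta> \<le> t" "t \<le> 1/2"
  have "- logsin t \<le> - ln t" using t d0 by (intro nf_a) auto
  also have "\<dots> \<le> LL" unfolding LL_def using t d0 by (intro neg_ln_big) auto
  finally show ?thesis .
qed

lemma nf_refl: "- logsin t = - logsin (1 - t)" using logsin_refl[of t] by simp

abbreviation "AF x \<equiv> \<bar>logsin (x + \<delta>) - logsin x\<bar>"

lemma AF_le: "AF x \<le> - logsin (x + \<delta>) - logsin x"
  using logsin_nonpos by (intro absdiff_le)

lemma B1: "x \<in> {0..\<delta>} \<Longrightarrow> AF x \<le> 2 * LL + 2 * sqrt \<delta> / sqrt x"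
proof -
  assume x: "x \<in> {0..\<delta>}"
  have "- logsin (x + \<delta>) \<le> LL" using x d0 d1 by (intro bigger_bound) auto
  moreover have "- logsin x \<le> LL + 2 * sqrt \<delta> / sqrt x" using x d1 by (intro small_bound) auto
  ultimately show ?thesis using AF_le[of x] by linarith
qed

lemma B3: "x \<in> {1 - 2 * \<delta>..1 - \<delta>} \<Longrightarrow> AF x \<le> 2 * LL + 2 * sqrt \<delta> / sqrt (1 - \<delta> - x)"
proof -
  assume x: "x \<in> {1 - 2 * \<delta>..1 - \<delta>}"
  have "- logsin x = - logsin (1 - x)" by (rule nf_refl)
  also have "\<dots> \<le> LL" using x d0 d1 by (intro bigger_bound) auto
  finally have a: "- logsin x \<le> LL" .
  have "- logsin (x + \<delta>) = - logsin (1 - \<delta> - x)" using nf_refl[of "x + \<delta>"] by (simp add: algebra_simps)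
  also have "\<dots> \<le> LL + 2 * sqrt \<delta> / sqrt (1 - \<delta> - x)" using x d0 d1 by (intro small_bound) auto
  finally have b: "- logsin (x + \<delta>) \<le> LL + 2 * sqrt \<delta> / sqrt (1 - \<delta> - x)" .
  show ?thesis using AF_le[of x] a b by linarith
qed

lemma B4: "x \<in> {1 - \<delta>..1} \<Longrightarrow> AF x \<le> 2 * LL + 2 * sqrt \<delta> / sqrt (1 - x) + 2 * sqrt \<delta> / sqrt (x - (1 - \<delta>))"
proof -
  assume x: "x \<in> {1 - \<delta>..1}"
  have "- logsin x = - logsin (1 - x)" by (rule nf_refl)
  also have "\<dots> \<le> LL + 2 * sqrt \<delta> / sqrt (1 - x)" using x d0 d1 by (intro small_bound) auto
  finally have a: "- logsin x \<le> LL + 2 * sqrt \<delta> / sqrt (1 - x)" .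
  have "logsin (x + \<delta>) = logsin ((x - (1 - \<delta>)) + 1)" by (simp add: algebra_simps)
  also have "\<dots> = logsin (x - (1 - \<delta>))" by (rule logsin_one)
  finally have e: "- logsin (x + \<delta>) = - logsin (x - (1 - \<delta>))" by simp
  also have "\<dots> \<le> LL + 2 * sqrt \<delta> / sqrt (x - (1 - \<delta>))" using x d0 d1 by (intro small_bound) auto
  finally have b: "- logsin (x + \<delta>) \<le> LL + 2 * sqrt \<delta> / sqrt (x - (1 - \<delta>))" .
  show ?thesis using AF_le[of x] a b by linarith
qed

lemma B2: "x \<in> {\<delta>..1 - 2 * \<delta>} \<Longrightarrow> AF x \<le> \<delta> * (1 / x + 1 / (1 - \<delta> - x))"
  using d0 d1 by (intro F_mid) auto

end




lemma ftc:
  fixes G g :: "real \<Rightarrow> real"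
  assumes "a \<le> b" "continuous_on {a..b} G" "\<And>x. a < x \<Longrightarrow> x < b \<Longrightarrow> (G has_real_derivative g x) (at x)"
  shows "(g has_integral (G b - G a)) {a..b}"
  using assms by (intro fundamental_theorem_of_calculus_interior)
     (auto simp: has_real_derivative_iff_has_vector_derivative)

context
  fixes \<delta> L :: real
  assumes d0: "0 < \<delta>" and d1: "\<delta> \<le> 1/16"
begin

lemma I1: "((\<lambda>x. 2 * L + 2 * sqrt \<delta> / sqrt x) has_integral (2 * L * \<delta> + 4 * \<delta>)) {0..\<delta>}"
proof -
  define G where "G = (\<lambda>x. 2 * L * x + 4 * sqrt \<delta> * sqrt x)"
  have "((\<lambda>x. 2 * L + 2 * sqrt \<delta> / sqrt x) has_integral (G \<delta> - G 0)) {0..\<delta>}"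
  proof (rule ftc)
    show "0 \<le> \<delta>" using d0 by simp
    show "continuous_on {0..\<delta>} G" unfolding G_def by (intro continuous_intros)
    fix x :: real assume x: "0 < x" "x < \<delta>"
    show "(G has_real_derivative 2 * L + 2 * sqrt \<delta> / sqrt x) (at x)"
      unfolding G_def using x by (auto intro!: derivative_eq_intros simp: field_simps)
  qed
  moreover have "G \<delta> - G 0 = 2 * L * \<delta> + 4 * \<delta>" using d0 by (simp add: G_def)
  ultimately show ?thesis by simp
qed

lemma I3: "((\<lambda>x. 2 * L + 2 * sqrt \<delta> / sqrt (1 - \<delta> - x)) has_integral (2 * L * \<delta> + 4 * \<delta>)) {1 - 2 * \<delta>..1 - \<delta>}"
proof -
  define G where "G = (\<lambda>x. 2 * L * x - 4 * sqrt \<delta> * sqrt (1 - \<delta> - x))"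
  have "((\<lambda>x. 2 * L + 2 * sqrt \<delta> / sqrt (1 - \<delta> - x)) has_integral (G (1 - \<delta>) - G (1 - 2 * \<delta>))) {1 - 2 * \<delta>..1 - \<delta>}"
  proof (rule ftc)
    show "1 - 2 * \<delta> \<le> 1 - \<delta>" using d0 by simp
    show "continuous_on {1 - 2 * \<delta>..1 - \<delta>} G" unfolding G_def by (intro continuous_intros)
    fix x :: real assume x: "1 - 2 * \<delta> < x" "x < 1 - \<delta>"
    show "(G has_real_derivative 2 * L + 2 * sqrt \<delta> / sqrt (1 - \<delta> - x)) (at x)"
      unfolding G_def using x by (auto intro!: derivative_eq_intros simp: field_simps)
  qed
  moreover have "G (1 - \<delta>) - G (1 - 2 * \<delta>) = 2 * L * \<delta> + 4 * \<delta>" using d0 by (simp add: G_def algebra_simps)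
  ultimately show ?thesis by simp
qed

lemma I4: "((\<lambda>x. 2 * L + 2 * sqrt \<delta> / sqrt (1 - x) + 2 * sqrt \<delta> / sqrt (x - (1 - \<delta>))) has_integral (2 * L * \<delta> + 8 * \<delta>)) {1 - \<delta>..1}"
proof -
  define G where "G = (\<lambda>x. 2 * L * x - 4 * sqrt \<delta> * sqrt (1 - x) + 4 * sqrt \<delta> * sqrt (x - (1 - \<delta>)))"
  have "((\<lambda>x. 2 * L + 2 * sqrt \<delta> / sqrt (1 - x) + 2 * sqrt \<delta> / sqrt (x - (1 - \<delta>))) has_integral (G 1 - G (1 - \<delta>))) {1 - \<delta>..1}"
  proof (rule ftc)
    show "1 - \<delta> \<le> 1" using d0 by simp
    show "continuous_on {1 - \<delta>..1} G" unfolding G_def by (intro continuous_intros)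
    fix x :: real assume x: "1 - \<delta> < x" "x < 1"
    show "(G has_real_derivative 2 * L + 2 * sqrt \<delta> / sqrt (1 - x) + 2 * sqrt \<delta> / sqrt (x - (1 - \<delta>))) (at x)"
      unfolding G_def using x by (auto intro!: derivative_eq_intros simp: field_simps)
  qed
  moreover have "G 1 - G (1 - \<delta>) = 2 * L * \<delta> + 8 * \<delta>" using d0 by (simp add: G_def algebra_simps)
  ultimately show ?thesis by simp
qed

lemma I2: "((\<lambda>x. \<delta> * (1 / x + 1 / (1 - \<delta> - x))) has_integral (2 * \<delta> * ln (1 - 2 * \<delta>) - 2 * \<delta> * ln \<delta>)) {\<delta>..1 - 2 * \<delta>}"
proof -
  define G where "G = (\<lambda>x. \<delta> * (ln x - ln (1 - \<delta> - x)))"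
  have "((\<lambda>x. \<delta> * (1 / x + 1 / (1 - \<delta> - x))) has_integral (G (1 - 2 * \<delta>) - G \<delta>)) {\<delta>..1 - 2 * \<delta>}"
  proof (rule ftc)
    show "\<delta> \<le> 1 - 2 * \<delta>" using d1 by simp
    show "continuous_on {\<delta>..1 - 2 * \<delta>} G" unfolding G_def using d0 d1
      by (intro continuous_intros) auto
    fix x :: real assume x: "\<delta> < x" "x < 1 - 2 * \<delta>"
    show "(G has_real_derivative \<delta> * (1 / x + 1 / (1 - \<delta> - x))) (at x)"
      unfolding G_def using x d0 by (auto intro!: derivative_eq_intros simp: field_simps)
  qed
  moreover have "G (1 - 2 * \<delta>) - G \<delta> = 2 * \<delta> * ln (1 - 2 * \<delta>) - 2 * \<delta> * ln \<delta>"
    by (simp add: G_def algebra_simps)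
  ultimately show ?thesis by simp
qed

lemma Ilow: "((\<lambda>x. \<delta> / (4 * x)) has_integral (\<delta> / 4 * (ln (1/4) - ln \<delta>))) {\<delta>..1/4}"
proof -
  define G where "G = (\<lambda>x. \<delta> / 4 * ln x)"
  have "((\<lambda>x. \<delta> / (4 * x)) has_integral (G (1/4) - G \<delta>)) {\<delta>..1/4}"
  proof (rule ftc)
    show "\<delta> \<le> 1/4" using d1 by simp
    show "continuous_on {\<delta>..1/4} G" unfolding G_def using d0
      by (intro continuous_intros) auto
    fix x :: real assume x: "\<delta> < x" "x < 1/4"
    show "(G has_real_derivative \<delta> / (4 * x)) (at x)"
      unfolding G_def using x d0 by (auto intro!: derivative_eq_intros simp: field_simps)
  qed
  moreover have "G (1/4) - G \<delta> = \<delta> / 4 * (ln (1/4) - ln \<delta>)" by (simp add: G_def algebra_simps)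
  ultimately show ?thesis by simp
qed

end




lemma part1_bounds:
  assumes d0: "0 < \<delta>" and d1: "\<delta> \<le> 1/16"
  shows "1/8 * \<delta> * \<bar>ln \<delta>\<bar> \<le> omega1 logsin \<delta> \<and> omega1 logsin \<delta> \<le> 24 * \<delta> * \<bar>ln \<delta>\<bar>"
proof -
  define f where "f = (\<lambda>x. \<bar>logsin (x + \<delta>) - logsin x\<bar>)"
  define L where "L = LL \<delta>"
  have L: "L = - ln \<delta>" by (simp add: L_def LL_def[OF d0 d1])
  have L1: "1 \<le> L" unfolding L_def by (rule LL_ge1[OF d0 d1])
  have L2: "2 * ln 4 \<le> L" unfolding L_def by (rule LL_ge2ln4[OF d0 d1])
  have absln: "\<bar>ln \<delta>\<bar> = L" using L L1 by simp
  have d1': "\<delta> < 1" using d1 by simp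
  have om: "omega1 logsin \<delta> = integral {0..1} f" unfolding f_def by (rule omega1_eq(1)[OF d0 d1'])
  have fi: "f integrable_on {0..1}" unfolding f_def by (rule omega1_eq(2)[OF d0 d1'])
  have sub: "f integrable_on {a..b}" if "0 \<le> a" "b \<le> 1" for a b
    using integrable_on_subinterval[OF fi] that by auto
  have hi: "(f has_integral integral {a..b} f) {a..b}" if "0 \<le> a" "b \<le> 1" for a b
    using integrable_integral[OF sub[OF that]] .
  have p1: "integral {0..\<delta>} f \<le> 2 * L * \<delta> + 4 * \<delta>"
    by (rule has_integral_le[OF hi I1[OF d0 d1, of L]]) (use d0 d1 B1[OF d0 d1] in \<open>auto simp: f_def L_def\<close>)
  have p2: "integral {\<delta>..1 - 2 * \<delta>} f \<le> 2 * \<delta> * ln (1 - 2 * \<delta>) - 2 * \<delta> * ln \<delta>"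
    by (rule has_integral_le[OF hi I2[OF d0 d1]]) (use d0 d1 B2[OF d0 d1] in \<open>auto simp: f_def\<close>)
  have p3: "integral {1 - 2 * \<delta>..1 - \<delta>} f \<le> 2 * L * \<delta> + 4 * \<delta>"
    by (rule has_integral_le[OF hi I3[OF d0 d1, of L]]) (use d0 d1 B3[OF d0 d1] in \<open>auto simp: f_def L_def\<close>)
  have p4: "integral {1 - \<delta>..1} f \<le> 2 * L * \<delta> + 8 * \<delta>"
    by (rule has_integral_le[OF hi I4[OF d0 d1, of L]]) (use d0 d1 B4[OF d0 d1] in \<open>auto simp: f_def L_def\<close>)
  have c1: "integral {0..\<delta>} f + integral {\<delta>..1} f = integral {0..1} f"
    by (rule Henstock_Kurzweil_Integration.integral_combine) (use d0 d1 fi in auto)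
  have c2: "integral {\<delta>..1 - 2 * \<delta>} f + integral {1 - 2 * \<delta>..1} f = integral {\<delta>..1} f"
    by (rule Henstock_Kurzweil_Integration.integral_combine) (use d0 d1 sub in auto)
  have c3: "integral {1 - 2 * \<delta>..1 - \<delta>} f + integral {1 - \<delta>..1} f = integral {1 - 2 * \<delta>..1} f"
    by (rule Henstock_Kurzweil_Integration.integral_combine) (use d0 d1 sub in auto)
  have ln12: "ln (1 - 2 * \<delta>) \<le> 0" using d0 d1 by simp
  have "2 * \<delta> * ln (1 - 2 * \<delta>) \<le> 0" using ln12 d0 by (simp add: mult_nonneg_nonpos)
  moreover have "- (2 * \<delta> * ln \<delta>) = 2 * L * \<delta>" by (simp add: L)
  ultimately have up: "integral {0..1} f \<le> 8 * L * \<delta> + 16 * \<delta>"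
    using p1 p2 p3 p4 c1 c2 c3 by linarith
  have h16: "16 * \<delta> * 1 \<le> 16 * \<delta> * L" by (rule mult_left_mono[OF L1]) (use d0 in simp)
  have "8 * L * \<delta> + 16 * \<delta> \<le> 24 * \<delta> * L" using h16 by (simp add: algebra_simps)
  with up have "integral {0..1} f \<le> 24 * \<delta> * L" by (rule order_trans)
  hence upper: "omega1 logsin \<delta> \<le> 24 * \<delta> * \<bar>ln \<delta>\<bar>" using om absln by simp
  have fnn: "\<forall>x\<in>{0..1}. 0 \<le> f x" by (simp add: f_def)
  have l1: "integral {\<delta>..1/4} f \<le> integral {0..1} f"
    by (rule integral_subset_le[OF _ sub fi fnn]) (use d0 in auto)
  have l2: "\<delta> / 4 * (ln (1/4) - ln \<delta>) \<le> integral {\<delta>..1/4} f"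
  proof (rule has_integral_le[OF Ilow[OF d0 d1] hi])
    fix x assume x: "x \<in> {\<delta>..1/4}"
    have "\<delta> / (4 * x) \<le> logsin (x + \<delta>) - logsin x" using x d0 d1 by (intro F_lower) auto
    thus "\<delta> / (4 * x) \<le> f x" by (simp add: f_def)
  qed (use d0 in auto)
  have "ln (1/4::real) = - ln 4" by (simp add: ln_div)
  hence "\<delta> / 4 * (ln (1/4) - ln \<delta>) = \<delta> / 4 * (L - ln 4)" by (simp add: L)
  also have "\<dots> \<ge> \<delta> / 4 * (L / 2)" using L2 d0 by (intro mult_left_mono) auto
  finally have A: "\<delta> / 4 * (L / 2) \<le> \<delta> / 4 * (ln (1/4) - ln \<delta>)" .
  have "1/8 * \<delta> * L = \<delta> / 4 * (L / 2)" by simp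
  also note A
  also note l2
  also note l1
  finally have "1/8 * \<delta> * L \<le> integral {0..1} f" .
  hence lower: "1/8 * \<delta> * \<bar>ln \<delta>\<bar> \<le> omega1 logsin \<delta>" using om absln by simp
  show ?thesis using upper lower by simp
qed

lemma part1:
  "\<exists>C1 C2::real. 0 < C1 \<and> C1 < C2 \<and>
           (\<forall>\<^sub>F \<delta> in at_right 0.
              C1 * \<delta> * \<bar>ln \<delta>\<bar> \<le> omega1 logsin \<delta> \<and>
              omega1 logsin \<delta> \<le> C2 * \<delta> * \<bar>ln \<delta>\<bar>)"
proof (intro exI conjI)
  show "0 < (1/8::real)" by simp
  show "(1/8::real) < 24" by simp
  show "\<forall>\<^sub>F \<delta> in at_right 0. 1/8 * \<delta> * \<bar>ln \<delta>\<bar> \<le> omega1 logsin \<delta> \<and> omega1 logsin \<delta> \<le> 24 * \<delta> * \<bar>ln \<delta>\<bar>"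
    unfolding eventually_at_right_field
    by (rule exI[of _ "1/16"], rule conjI, simp, (intro allI impI part1_bounds; auto))
qed


theorem theorem3p2:
  shows "(\<exists>C1 C2::real. 0 < C1 \<and> C1 < C2 \<and>
           (\<forall>\<^sub>F \<delta> in at_right 0.
              C1 * \<delta> * \<bar>ln \<delta>\<bar> \<le> omega1 logsin \<delta> \<and>
              omega1 logsin \<delta> \<le> C2 * \<delta> * \<bar>ln \<delta>\<bar>))
       \<and> (AE \<xi> in lborel.
           (\<lambda>N. (\<Sum>n=1..N. ln \<bar>sin (pi * (2 ^ n * \<xi> - \<xi>))\<bar>) / real N)
             \<longlonglongrightarrow> - ln 2)"
proof (rule conjI)
  show "\<exists>C1 C2::real. 0 < C1 \<and> C1 < C2 \<and>
           (\<forall>\<^sub>F \<delta> in at_right 0.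
              C1 * \<delta> * \<bar>ln \<delta>\<bar> \<le> omega1 logsin \<delta> \<and>
              omega1 logsin \<delta> \<le> C2 * \<delta> * \<bar>ln \<delta>\<bar>)"
    by (rule part1)
  show "AE \<xi> in lborel.
           (\<lambda>N. (\<Sum>n=1..N. ln \<bar>sin (pi * (2 ^ n * \<xi> - \<xi>))\<bar>) / real N)
             \<longlonglongrightarrow> - ln 2"
    using AE_Pconv unfolding Pconv_def .
qed

end
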